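(* If $(f_n)$ is a sequence of finitary Boolean functions with $\delta_{f_n}\to0$, then $(f_n)$ is noise sensitive.
   Context: Let $\Omega=\{-1,1\}$ and $\Omega^\infty=\{-1,1\}^{\mathbb N}$ with the uniform product probability measure; $\omega$ denotes a uniformly random element. A Boolean function is a measurable map $f:\Omega^\infty\to\Omega$. A set $W\subseteq\mathbb N$ is a witness set for $f$ at $\omega$ if there is an event $A$ with $\mathbb P(A)=1$ such that for all $\tilde\omega\in A$: if $\tilde\omega_i=\omega_i$ for all $i\in W$ then $f(\tilde\omega)=f(\omega)$. $f$ is finitary if almost surely a finite witness set exists. A (randomised) algorithm $A$ for a finitary $f$ queries bits of $\omega$ one at a time, each next index chosen as a function of the bits queried so far and independent auxiliary randomness, and stops once the set of queried bits is a witness set for $f$ at $\omega$; it must query almost surely only finitely many bits. $W(A)$ is the set of queried bits. The revealment of $f$ is $\delta_f=\inf_A\sup_i\mathbb P(i\in W(A))$ over all such algorithms. For $\epsilon\in[0,1]$, $\omega^\epsilon$ is obtained from $\omega$ by, independently for each coordinate, with probability $\epsilon$ replacing $\omega_i$ by a fresh uniform bit. A sequence $(f_n)$ is noise sensitive if for every $\epsilon\in(0,1]$, $\mathbb E[f_n(\omega)f_n(\omega^\epsilon)]-\mathbb E[f_n(\omega)]^2\to0$. *)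

theory Defs
  imports "HOL-Probability.Probability"
begin

definition coin :: "real measure" where
  "coin = measure_pmf (pmf_of_set {-1, 1})"

definition Cube :: "(nat \<Rightarrow> real) measure" where
  "Cube = PiM UNIV (\<lambda>_. coin)"

definition boolean_fun :: "((nat \<Rightarrow> real) \<Rightarrow> real) \<Rightarrow> bool" where
  "boolean_fun f \<longleftrightarrow> f \<in> borel_measurable Cube \<and> (\<forall>\<omega>\<in>space Cube. f \<omega> \<in> {-1, 1})"

definition witness :: "((nat \<Rightarrow> real) \<Rightarrow> real) \<Rightarrow> nat set \<Rightarrow> (nat \<Rightarrow> real) \<Rightarrow> bool" where
  "witness f W \<omega> \<longleftrightarrow>
     (\<exists>A\<in>sets Cube. measure Cube A = 1 \<and>
        (\<forall>\<omega>'\<in>A. (\<forall>i\<in>W. \<omega>' i = \<omega> i) \<longrightarrow> f \<omega>' = f \<omega>))"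

definition finitary :: "((nat \<Rightarrow> real) \<Rightarrow> real) \<Rightarrow> bool" where
  "finitary f \<longleftrightarrow> (AE \<omega> in Cube. \<exists>W. finite W \<and> witness f W \<omega>)"

text \<open>A query rule q: given the auxiliary randomness rho (an independent uniform
  element of {-1,1}^N) and the history of queried (index, value) pairs,
  returns the next index to query.\<close>

fun hist :: "((nat \<Rightarrow> real) \<Rightarrow> (nat \<times> real) list \<Rightarrow> nat) \<Rightarrow> (nat \<Rightarrow> real) \<Rightarrow> (nat \<Rightarrow> real)
              \<Rightarrow> nat \<Rightarrow> (nat \<times> real) list" where
  "hist q \<rho> \<omega> 0 = []"
| "hist q \<rho> \<omega> (Suc k) = hist q \<rho> \<omega> k @ [(q \<rho> (hist q \<rho> \<omega> k), \<omega> (q \<rho> (hist q \<rho> \<omega> k)))]"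

definition queried :: "((nat \<Rightarrow> real) \<Rightarrow> (nat \<times> real) list \<Rightarrow> nat) \<Rightarrow> (nat \<Rightarrow> real) \<Rightarrow> (nat \<Rightarrow> real)
              \<Rightarrow> nat \<Rightarrow> nat set" where
  "queried q \<rho> \<omega> k = fst ` set (hist q \<rho> \<omega> k)"

definition stop_time :: "((nat \<Rightarrow> real) \<Rightarrow> real) \<Rightarrow> ((nat \<Rightarrow> real) \<Rightarrow> (nat \<times> real) list \<Rightarrow> nat)
              \<Rightarrow> (nat \<Rightarrow> real) \<Rightarrow> (nat \<Rightarrow> real) \<Rightarrow> nat" where
  "stop_time f q \<omega> \<rho> = (LEAST k. witness f (queried q \<rho> \<omega> k) \<omega>)"

definition alg_W :: "((nat \<Rightarrow> real) \<Rightarrow> real) \<Rightarrow> ((nat \<Rightarrow> real) \<Rightarrow> (nat \<times> real) list \<Rightarrow> nat)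
              \<Rightarrow> (nat \<Rightarrow> real) \<Rightarrow> (nat \<Rightarrow> real) \<Rightarrow> nat set" where
  "alg_W f q \<omega> \<rho> = queried q \<rho> \<omega> (stop_time f q \<omega> \<rho>)"

definition valid_alg :: "((nat \<Rightarrow> real) \<Rightarrow> real) \<Rightarrow> ((nat \<Rightarrow> real) \<Rightarrow> (nat \<times> real) list \<Rightarrow> nat) \<Rightarrow> bool" where
  "valid_alg f q \<longleftrightarrow>
     (\<forall>h. (\<lambda>\<rho>. q \<rho> h) \<in> Cube \<rightarrow>\<^sub>M count_space UNIV) \<and>
     (AE p in Cube \<Otimes>\<^sub>M Cube. \<exists>k. witness f (queried q (snd p) (fst p) k) (fst p)) \<and>
     (\<forall>i. {p \<in> space (Cube \<Otimes>\<^sub>M Cube). i \<in> alg_W f q (fst p) (snd p)} \<in> sets (Cube \<Otimes>\<^sub>M Cube))"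

definition reveal_prob :: "((nat \<Rightarrow> real) \<Rightarrow> real) \<Rightarrow> ((nat \<Rightarrow> real) \<Rightarrow> (nat \<times> real) list \<Rightarrow> nat) \<Rightarrow> nat \<Rightarrow> real" where
  "reveal_prob f q i =
     measure (Cube \<Otimes>\<^sub>M Cube) {p \<in> space (Cube \<Otimes>\<^sub>M Cube). i \<in> alg_W f q (fst p) (snd p)}"

definition revealment :: "((nat \<Rightarrow> real) \<Rightarrow> real) \<Rightarrow> real" where
  "revealment f = (INF q\<in>{q. valid_alg f q}. SUP i. reveal_prob f q i)"

text \<open>Joint law of one coordinate (omega_i, omega^eps_i).\<close>
definition noise_pmf :: "real \<Rightarrow> (real \<times> real) pmf" where
  "noise_pmf \<epsilon> =
     do { x \<leftarrow> pmf_of_set {-1, 1::real};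
          r \<leftarrow> bernoulli_pmf \<epsilon>;
          z \<leftarrow> pmf_of_set {-1, 1::real};
          return_pmf (x, if r then z else x) }"

definition NoiseCube :: "real \<Rightarrow> (nat \<Rightarrow> real \<times> real) measure" where
  "NoiseCube \<epsilon> = PiM UNIV (\<lambda>_. measure_pmf (noise_pmf \<epsilon>))"

definition noise_corr :: "((nat \<Rightarrow> real) \<Rightarrow> real) \<Rightarrow> real \<Rightarrow> real" where
  "noise_corr f \<epsilon> = (\<integral>p. f (\<lambda>i. fst (p i)) * f (\<lambda>i. snd (p i)) \<partial>NoiseCube \<epsilon>)"

definition noise_sensitive :: "(nat \<Rightarrow> (nat \<Rightarrow> real) \<Rightarrow> real) \<Rightarrow> bool" where
  "noise_sensitive fs \<longleftrightarrow>
     (\<forall>\<epsilon>\<in>{0<..1}. (\<lambda>n. noise_corr (fs n) \<epsilon> - (\<integral>\<omega>. fs n \<omega> \<partial>Cube)^2) \<longlonglongrightarrow> 0)"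

end

theory Submission
  imports Defs
begin

lemma sets_coin[simp]: "sets coin = UNIV" by (simp add: coin_def)
lemma space_coin[simp]: "space coin = UNIV" by (simp add: coin_def)
lemma prob_space_coin: "prob_space coin" by (simp add: coin_def prob_space_measure_pmf)

lemma space_Cube[simp]: "space Cube = UNIV"
  by (simp add: Cube_def space_PiM)

lemma prob_space_Cube: "prob_space Cube"
  unfolding Cube_def by (rule prob_space_PiM) (rule prob_space_coin)

interpretation C: prob_space Cube by (rule prob_space_Cube)

lemma measurable_coord[measurable]: "(\<lambda>\<omega>. g (\<omega> i)) \<in> Cube \<rightarrow>\<^sub>M count_space UNIV"
proof -
  have "(\<lambda>\<omega>. \<omega> i) \<in> Cube \<rightarrow>\<^sub>M coin" unfolding Cube_def by simp
  moreover have "g \<in> coin \<rightarrow>\<^sub>M count_space UNIV" by (simp add: coin_def)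
  ultimately show ?thesis by (rule measurable_compose)
qed

lemma measurable_coord_borel[measurable]: "(\<lambda>\<omega>. g (\<omega> i)) \<in> borel_measurable Cube"
proof -
  have "(\<lambda>\<omega>. \<omega> i) \<in> Cube \<rightarrow>\<^sub>M coin" unfolding Cube_def by simp
  moreover have "g \<in> borel_measurable coin" by (simp add: coin_def)
  ultimately show ?thesis by (rule measurable_compose)
qed

lemma sets_coord[measurable]: "{\<omega>. P (\<omega> i)} \<in> sets Cube"
proof -
  have "(\<lambda>\<omega>. P (\<omega> i)) \<in> Cube \<rightarrow>\<^sub>M count_space UNIV" by (rule measurable_coord)
  hence "(\<lambda>\<omega>. P (\<omega> i)) -` {True} \<inter> space Cube \<in> sets Cube" by (rule measurable_sets) simp
  thus ?thesis by (simp add: vimage_def)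
qed

lemma coin_pm: "measure coin {-1} = 1/2" "measure coin {1} = 1/2"
  by (simp_all add: coin_def measure_pmf_single)

lemma coin_set: "measure coin A = card (A \<inter> {-1,1}) / 2"
  unfolding coin_def by (subst measure_pmf_of_set) (auto simp: card_insert_if Int_commute)

definition cyl :: "nat set \<Rightarrow> (nat \<Rightarrow> real) \<Rightarrow> (nat \<Rightarrow> real) set" where
  "cyl I x = {\<omega>. \<forall>i\<in>I. \<omega> i = x i}"

lemma cyl_emb: "cyl I x = prod_emb UNIV (\<lambda>_. coin) I (Pi\<^sub>E I (\<lambda>i. {x i}))"
  by (auto simp: cyl_def prod_emb_def PiE_iff)

lemma sets_cyl[measurable]: "finite I \<Longrightarrow> cyl I x \<in> sets Cube"
  unfolding cyl_emb Cube_def by (rule sets_PiM_I) auto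

lemma emeasure_cyl: "finite I \<Longrightarrow> emeasure Cube (cyl I x) = (\<Prod>i\<in>I. emeasure coin {x i})"
  unfolding cyl_emb Cube_def by (rule emeasure_PiM_emb) (auto simp: prob_space_coin)

lemma measure_cyl: assumes "finite I"
  shows "measure Cube (cyl I x) = (if \<forall>i\<in>I. x i \<in> {-1,1} then (1/2)^card I else 0)"
proof -
  have "measure Cube (cyl I x) = (\<Prod>i\<in>I. measure coin {x i})"
  proof -
    have "emeasure Cube (cyl I x) = (\<Prod>i\<in>I. ennreal (measure coin {x i}))"
      using emeasure_cyl[OF assms, of x] by (simp add: coin_def measure_pmf.emeasure_eq_measure)
    also have "\<dots> = ennreal (\<Prod>i\<in>I. measure coin {x i})" by (rule prod_ennreal) simp
    finally show ?thesis by (simp add: C.emeasure_eq_measure prod_nonneg)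
  qed
  also have "\<dots> = (\<Prod>i\<in>I. if x i \<in> {-1,1} then 1/2 else 0)"
    by (intro prod.cong) (auto simp: coin_set)
  also have "\<dots> = (if \<forall>i\<in>I. x i \<in> {-1,1} then (1/2)^card I else 0)"
    using assms by (auto simp: prod_constant)
  finally show ?thesis .
qed

lemma distr_PiM_coord:
  assumes M: "\<And>i. i \<in> I \<Longrightarrow> prob_space (M i)"
    and g: "\<And>i. i \<in> I \<Longrightarrow> g i \<in> M i \<rightarrow>\<^sub>M N i"
    and d: "\<And>i. i \<in> I \<Longrightarrow> distr (M i) (N i) (g i) = N i"
  shows "distr (PiM I M) (PiM I N) (\<lambda>x. \<lambda>i\<in>I. g i (x i)) = PiM I N"
proof (rule measure_eqI_PiM_infinite[symmetric, OF refl])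
  have N: "\<And>i. i \<in> I \<Longrightarrow> prob_space (N i)"
    using M g d by (metis prob_space.prob_space_distr)
  interpret prob_space "PiM I N" using N by (rule prob_space_PiM)
  show "finite_measure (PiM I N)" by unfold_locales
  have mi: "(\<lambda>x. g i (x i)) \<in> PiM I M \<rightarrow>\<^sub>M N i" if "i \<in> I" for i
    using measurable_compose[of "\<lambda>x. x i" "PiM I M" "M i" "g i" "N i", OF measurable_component_singleton[OF that] g[OF that]] .
  have meas: "(\<lambda>x. \<lambda>i\<in>I. g i (x i)) \<in> PiM I M \<rightarrow>\<^sub>M PiM I N"
    by (rule measurable_PiM_single') (auto intro!: mi
        simp: space_PiM PiE_iff measurable_space[OF g])
  show "sets (distr (PiM I M) (PiM I N) (\<lambda>x. \<lambda>i\<in>I. g i (x i))) = sets (PiM I N)" by simp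
  fix A J assume J: "finite J" "J \<subseteq> I" and A: "\<And>i. i \<in> J \<Longrightarrow> A i \<in> sets (N i)"
  have pre: "(\<lambda>x. \<lambda>i\<in>I. g i (x i)) -` prod_emb I N J (Pi\<^sub>E J A) \<inter> space (PiM I M)
      = prod_emb I M J (Pi\<^sub>E J (\<lambda>j. g j -` A j \<inter> space (M j)))"
    using J g by (auto simp: prod_emb_def space_PiM PiE_iff subset_eq) (metis measurable_space)
  have "emeasure (distr (PiM I M) (PiM I N) (\<lambda>x. \<lambda>i\<in>I. g i (x i))) (prod_emb I N J (Pi\<^sub>E J A))
      = emeasure (PiM I M) (prod_emb I M J (Pi\<^sub>E J (\<lambda>j. g j -` A j \<inter> space (M j))))"
    using J A by (subst emeasure_distr[OF meas]) (auto intro!: sets_PiM_I simp: pre)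
  also have "\<dots> = (\<Prod>j\<in>J. emeasure (M j) (g j -` A j \<inter> space (M j)))"
    using J A g M by (intro emeasure_PiM_emb) (auto intro!: measurable_sets)
  also have "\<dots> = (\<Prod>j\<in>J. emeasure (N j) (A j))"
  proof (intro prod.cong refl)
    fix j assume "j \<in> J"
    then show "emeasure (M j) (g j -` A j \<inter> space (M j)) = emeasure (N j) (A j)"
      using J A g d[of j] by (metis emeasure_distr subsetD)
  qed
  also have "\<dots> = emeasure (PiM I N) (prod_emb I N J (Pi\<^sub>E J A))"
    using J A N by (intro emeasure_PiM_emb[symmetric]) auto
  finally show "emeasure (PiM I N) (prod_emb I N J (Pi\<^sub>E J A)) =
     emeasure (distr (PiM I M) (PiM I N) (\<lambda>x. \<lambda>i\<in>I. g i (x i))) (prod_emb I N J (Pi\<^sub>E J A))" by simp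
qed

definition flp :: "nat \<Rightarrow> (nat \<Rightarrow> real) \<Rightarrow> (nat \<Rightarrow> real)" where
  "flp i x = fun_upd x i (- x i)"

lemma flp_flp[simp]: "flp i (flp i \<omega>) = \<omega>" by (auto simp: flp_def)
lemma flp_apply: "flp i \<omega> j = (if j = i then - \<omega> i else \<omega> j)" by (simp add: flp_def)

lemma distr_coin_uminus: "distr coin coin uminus = coin"
proof -
  have "distr coin coin uminus = measure_pmf (map_pmf uminus (pmf_of_set {-1,1::real}))"
    unfolding map_pmf_rep_eq by (rule distr_cong) (simp_all add: coin_def)
  also have "map_pmf uminus (pmf_of_set {-1,1::real}) = pmf_of_set (uminus ` {-1,1})"
    by (rule map_pmf_of_set_inj) auto
  also have "uminus ` {-1,1::real} = {-1,1}" by auto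
  finally show ?thesis by (simp add: coin_def)
qed

lemma measurable_flp[measurable]: "flp i \<in> Cube \<rightarrow>\<^sub>M Cube"
  unfolding Cube_def
proof (rule measurable_PiM_single')
  fix j :: nat
  have "(\<lambda>\<omega>. \<omega> j) \<in> Pi\<^sub>M UNIV (\<lambda>_. coin) \<rightarrow>\<^sub>M coin" by simp
  moreover have "(\<lambda>\<omega>. - \<omega> i) \<in> Pi\<^sub>M UNIV (\<lambda>_. coin) \<rightarrow>\<^sub>M coin"
    using measurable_coord[of uminus i] by (simp add: Cube_def coin_def)
  ultimately show "(\<lambda>\<omega>. flp i \<omega> j) \<in> Pi\<^sub>M UNIV (\<lambda>_. coin) \<rightarrow>\<^sub>M coin"
    by (cases "j = i") (simp_all add: flp_def)
qed (simp add: space_PiM)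

lemma distr_flp: "distr Cube Cube (flp i) = Cube"
proof -
  let ?g = "\<lambda>j::nat. if j = i then (uminus :: real \<Rightarrow> real) else id"
  have "distr Cube Cube (\<lambda>x. \<lambda>j\<in>UNIV. ?g j (x j)) = Cube"
    unfolding Cube_def
    by (rule distr_PiM_coord) (auto simp: measurable_def prob_space_coin distr_coin_uminus id_def distr_id)
  moreover have "(\<lambda>x. \<lambda>j\<in>UNIV. ?g j (x j)) = flp i" by (auto simp: flp_def fun_eq_iff)
  ultimately show ?thesis by simp
qed

lemma integral_flp: assumes [measurable]: "h \<in> borel_measurable Cube"
  shows "(\<integral>\<omega>. h (flp i \<omega>) \<partial>Cube) = (\<integral>\<omega>. (h \<omega> :: real) \<partial>Cube)"
proof -
  have "(\<integral>\<omega>. h \<omega> \<partial>Cube) = (\<integral>\<omega>. h \<omega> \<partial>distr Cube Cube (flp i))" by (simp add: distr_flp)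
  also have "\<dots> = (\<integral>\<omega>. h (flp i \<omega>) \<partial>Cube)"
    by (rule integral_distr) simp_all
  finally show ?thesis by simp
qed

lemma AE_flp: assumes "AE \<omega> in Cube. P \<omega>" shows "AE \<omega> in Cube. P (flp i \<omega>)"
proof -
  have "AE \<omega> in distr Cube Cube (flp i). P \<omega>" unfolding distr_flp by (rule assms)
  thus ?thesis by (rule AE_distrD[rotated]) simp
qed

definition chi :: "nat set \<Rightarrow> (nat \<Rightarrow> real) \<Rightarrow> real" where
  "chi T \<omega> = (\<Prod>i\<in>T. sgn (\<omega> i))"

lemma chi_measurable[measurable]: "chi T \<in> borel_measurable Cube"
  unfolding chi_def by (intro borel_measurable_prod) simp

lemma abs_chi_le: "\<bar>chi T \<omega>\<bar> \<le> 1"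
  unfolding chi_def abs_prod by (intro prod_le_1) (auto simp: abs_sgn_eq)

lemma chi_flp_in: "finite T \<Longrightarrow> i \<in> T \<Longrightarrow> chi T (flp i \<omega>) = - chi T \<omega>"
  unfolding chi_def
  by (subst (1 2) prod.remove[of T i]) (auto simp: flp_apply intro!: prod.cong)

lemma chi_flp_out: "i \<notin> T \<Longrightarrow> chi T (flp i \<omega>) = chi T \<omega>"
  unfolding chi_def by (auto simp: flp_apply intro!: prod.cong)

lemma chi_sq_flp: "chi T (flp i \<omega>) ^ 2 = chi T \<omega> ^ 2"
  unfolding chi_def prod_power_distrib by (intro prod.cong) (auto simp: flp_apply)

lemma sets_J_mem:
  assumes "\<And>i. {\<omega>. i \<in> J \<omega>} \<in> sets Cube" and "finite T"
  shows "{\<omega>. T \<subseteq> J \<omega>} \<in> sets Cube" "{\<omega>. \<not> T \<subseteq> J \<omega>} \<in> sets Cube"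
    "{\<omega>. T \<inter> J \<omega> = {}} \<in> sets Cube" "{\<omega>. T \<inter> J \<omega> \<noteq> {}} \<in> sets Cube"
proof -
  have a: "{\<omega>. T \<subseteq> J \<omega>} = {\<omega>\<in>space Cube. \<forall>i\<in>T. i \<in> J \<omega>}" by auto
  show 1: "{\<omega>. T \<subseteq> J \<omega>} \<in> sets Cube" unfolding a using assms by (intro sets.sets_Collect_finite_All) auto
  have b: "{\<omega>. T \<inter> J \<omega> = {}} = {\<omega>\<in>space Cube. \<forall>i\<in>T. \<not> i \<in> J \<omega>}" by auto
  have c: "{\<omega>\<in>space Cube. \<not> i \<in> J \<omega>} = space Cube - {\<omega>. i \<in> J \<omega>}" for i by auto
  show 2: "{\<omega>. T \<inter> J \<omega> = {}} \<in> sets Cube" unfolding b using assms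
    by (intro sets.sets_Collect_finite_All) (auto simp only: c intro!: sets.Diff)
  have "{\<omega>. \<not> T \<subseteq> J \<omega>} = space Cube - {\<omega>. T \<subseteq> J \<omega>}" by auto
  thus "{\<omega>. \<not> T \<subseteq> J \<omega>} \<in> sets Cube" using 1 by (metis sets.compl_sets)
  have "{\<omega>. T \<inter> J \<omega> \<noteq> {}} = space Cube - {\<omega>. T \<inter> J \<omega> = {}}" by auto
  thus "{\<omega>. T \<inter> J \<omega> \<noteq> {}} \<in> sets Cube" using 2 by (metis sets.compl_sets)
qed

lemma integral_zero_by_flp:
  assumes G: "G \<in> borel_measurable Cube"
    and ae: "AE \<omega> in Cube. G (flp i \<omega>) = - G \<omega>"
  shows "(\<integral>\<omega>. G \<omega> \<partial>Cube) = (0::real)"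
proof -
  have "(\<integral>\<omega>. G \<omega> \<partial>Cube) = (\<integral>\<omega>. G (flp i \<omega>) \<partial>Cube)" using integral_flp[OF G] by simp
  also have "\<dots> = (\<integral>\<omega>. - G \<omega> \<partial>Cube)"
    by (rule integral_cong_AE) (use ae G in auto)
  finally show ?thesis by simp
qed

lemma master_lemma:
  fixes J :: "(nat \<Rightarrow> real) \<Rightarrow> nat set" and F :: "(nat \<Rightarrow> real) \<Rightarrow> real"
  assumes T: "finite T"
    and Jm: "\<And>i. {\<omega>. i \<in> J \<omega>} \<in> sets Cube"
    and Fm: "F \<in> borel_measurable Cube" and Fb: "\<And>\<omega>. \<bar>F \<omega>\<bar> \<le> B"
    and inv: "\<And>i. i \<in> T \<Longrightarrow> AE \<omega> in Cube. i \<notin> J \<omega> \<longrightarrow> J (flp i \<omega>) = J \<omega> \<and> F (flp i \<omega>) = F \<omega>"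
  shows "(\<integral>\<omega>. chi T \<omega> * F \<omega> * indicator {\<omega>. \<not> T \<subseteq> J \<omega>} \<omega> \<partial>Cube) = 0"
proof -
  define E where "E i = {\<omega>. i \<notin> J \<omega> \<and> (\<forall>j\<in>T. j < i \<longrightarrow> j \<in> J \<omega>)}" for i
  define H where "H \<omega> = chi T \<omega> * F \<omega> * indicator {\<omega>. \<not> T \<subseteq> J \<omega>} \<omega>" for \<omega>
  have Em: "E i \<in> sets Cube" for i
  proof -
    have "E i = (space Cube - {\<omega>. i \<notin> J \<omega> \<longrightarrow> False}) \<inter> {\<omega>. {j\<in>T. j < i} \<subseteq> J \<omega>}"
      unfolding E_def by auto
    thus ?thesis using sets_J_mem(1)[OF Jm, of "{j\<in>T. j < i}"] Jm[of i] T by auto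
  qed
  have Hm[measurable]: "H \<in> borel_measurable Cube"
    unfolding H_def using sets_J_mem(2)[OF Jm T] Fm by measurable
  have ind: "indicator {\<omega>. \<not> T \<subseteq> J \<omega>} \<omega> = (\<Sum>i\<in>T. indicator (E i) \<omega> :: real)" for \<omega>
  proof (cases "T \<subseteq> J \<omega>")
    case True
    then have "\<omega> \<notin> E i" if "i \<in> T" for i using that by (auto simp: E_def)
    then show ?thesis using True by simp
  next
    case False
    define m where "m = Min (T - J \<omega>)"
    have ne: "T - J \<omega> \<noteq> {}" using False by auto
    have m: "m \<in> T" "m \<notin> J \<omega>" using Min_in[of "T - J \<omega>"] ne T unfolding m_def by auto
    have mE: "\<omega> \<in> E m"
    proof -
      have "j \<in> J \<omega>" if "j \<in> T" "j < m" for j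
      proof (rule ccontr)
        assume "j \<notin> J \<omega>"
        then have "m \<le> j" unfolding m_def using that T by (intro Min_le) auto
        then show False using that by simp
      qed
      then show ?thesis using m by (auto simp: E_def)
    qed
    have "\<omega> \<notin> E i" if "i \<in> T" "i \<noteq> m" for i
    proof
      assume "\<omega> \<in> E i"
      then have i: "i \<notin> J \<omega>" "\<forall>j\<in>T. j < i \<longrightarrow> j \<in> J \<omega>" by (auto simp: E_def)
      have "m \<le> i" using i that T unfolding m_def by (intro Min_le) auto
      moreover have "\<not> m < i" using i(2) m by auto
      ultimately show False using that by auto
    qed
    then have "(\<Sum>i\<in>T. indicator (E i) \<omega> :: real) = (\<Sum>i\<in>T. if i = m then 1 else 0)"
      using mE by (intro sum.cong) (auto simp: indicator_def)
    also have "\<dots> = 1" using m T by simp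
    finally show ?thesis using False by simp
  qed
  have H_sum: "H \<omega> = (\<Sum>i\<in>T. H \<omega> * indicator (E i) \<omega>)" for \<omega>
  proof -
    have "H \<omega> = chi T \<omega> * F \<omega> * (\<Sum>i\<in>T. indicator (E i) \<omega>)" unfolding H_def ind ..
    also have "\<dots> = (\<Sum>i\<in>T. chi T \<omega> * F \<omega> * indicator (E i) \<omega>)" by (simp add: sum_distrib_left)
    also have "\<dots> = (\<Sum>i\<in>T. H \<omega> * indicator (E i) \<omega>)"
      unfolding H_def by (intro sum.cong refl) (auto simp: indicator_def E_def)
    finally show ?thesis .
  qed
  have zero: "(\<integral>\<omega>. H \<omega> * indicator (E i) \<omega> \<partial>Cube) = 0" if iT: "i \<in> T" for i
  proof (rule integral_zero_by_flp[where i=i])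
    show "(\<lambda>\<omega>. H \<omega> * indicator (E i) \<omega>) \<in> borel_measurable Cube" using Em[of i] by measurable
    have ae1: "AE \<omega> in Cube. i \<notin> J \<omega> \<longrightarrow> J (flp i \<omega>) = J \<omega> \<and> F (flp i \<omega>) = F \<omega>" by (rule inv[OF iT])
    have ae2: "AE \<omega> in Cube. i \<notin> J (flp i \<omega>) \<longrightarrow> J (flp i (flp i \<omega>)) = J (flp i \<omega>) \<and> F (flp i (flp i \<omega>)) = F (flp i \<omega>)"
      by (rule AE_flp[OF ae1])
    show "AE \<omega> in Cube. H (flp i \<omega>) * indicator (E i) (flp i \<omega>) = - (H \<omega> * indicator (E i) \<omega>)"
      using ae1 ae2
    proof eventually_elim
      case (elim \<omega>)
      show ?case
      proof (cases "\<omega> \<in> E i")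
        case True
        then have "i \<notin> J \<omega>" by (auto simp: E_def)
        then have eq: "J (flp i \<omega>) = J \<omega>" "F (flp i \<omega>) = F \<omega>" using elim(1) by auto
        have "flp i \<omega> \<in> E i" using True eq by (simp add: E_def)
        moreover have "\<not> T \<subseteq> J \<omega>" using True iT by (auto simp: E_def)
        ultimately show ?thesis using True eq chi_flp_in[OF T iT] by (simp add: H_def)
      next
        case False
        have "flp i \<omega> \<notin> E i"
        proof
          assume a: "flp i \<omega> \<in> E i"
          then have "i \<notin> J (flp i \<omega>)" by (auto simp: E_def)
          then have "J \<omega> = J (flp i \<omega>)" using elim(2) by auto
          then show False using a False by (simp add: E_def)
        qed
        then show ?thesis using False by simp
      qed
    qed
  qed
  have intg: "integrable Cube (\<lambda>\<omega>. H \<omega> * indicator (E i) \<omega>)" for i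
  proof (rule C.integrable_const_bound[where B=B])
    show "AE \<omega> in Cube. norm (H \<omega> * indicator (E i) \<omega>) \<le> B"
    proof (intro AE_I2)
      fix \<omega>
      have "\<bar>H \<omega> * indicator (E i) \<omega>\<bar> \<le> \<bar>chi T \<omega>\<bar> * \<bar>F \<omega>\<bar>"
        unfolding H_def by (auto simp: abs_mult indicator_def)
      also have "\<dots> \<le> 1 * B" using abs_chi_le Fb by (intro mult_mono) auto
      finally show "norm (H \<omega> * indicator (E i) \<omega>) \<le> B" by simp
    qed
    show "(\<lambda>\<omega>. H \<omega> * indicator (E i) \<omega>) \<in> borel_measurable Cube" using Em[of i] by measurable
  qed
  have "(\<integral>\<omega>. H \<omega> \<partial>Cube) = (\<integral>\<omega>. (\<Sum>i\<in>T. H \<omega> * indicator (E i) \<omega>) \<partial>Cube)"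
    by (subst H_sum) simp
  also have "\<dots> = (\<Sum>i\<in>T. \<integral>\<omega>. H \<omega> * indicator (E i) \<omega> \<partial>Cube)"
    by (rule Bochner_Integration.integral_sum[OF intg])
  also have "\<dots> = 0" using zero by simp
  finally show ?thesis unfolding H_def .
qed

lemma intb: "f \<in> borel_measurable Cube \<Longrightarrow> (\<And>\<omega>. \<bar>f \<omega>\<bar> \<le> B) \<Longrightarrow> integrable Cube (f :: _ \<Rightarrow> real)"
  by (rule C.integrable_const_bound[where B=B]) auto

lemma AE_pm: "AE \<omega> in Cube. \<forall>i. \<omega> i \<in> {-1, 1}"
proof (subst AE_all_countable, intro allI)
  fix i :: nat
  have "AE x in coin. x \<in> {-1, 1}"
    unfolding coin_def by (rule AE_pmfI) (simp add: set_pmf_of_set)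
  then show "AE \<omega> in Cube. \<omega> i \<in> {-1, 1}"
    unfolding Cube_def by (rule AE_PiM_component[rotated 2]) (auto simp: prob_space_coin)
qed

lemma sgn_sq_pm: "x \<in> {-1, 1} \<Longrightarrow> sgn x ^ 2 = (1::real)" by auto

lemma chi_sq_le: "chi T \<omega> ^ 2 \<le> 1"
  using abs_chi_le[of T \<omega>] by (metis abs_ge_zero power2_abs power_le_one)

lemma chi_sq_AE: "AE \<omega> in Cube. chi S \<omega> ^ 2 = 1"
  using AE_pm
proof eventually_elim
  case (elim \<omega>)
  have "chi S \<omega> ^ 2 = (\<Prod>i\<in>S. sgn (\<omega> i) ^ 2)" unfolding chi_def prod_power_distrib ..
  also have "\<dots> = 1" using elim by (intro prod.neutral) (simp add: sgn_sq_pm)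
  finally show ?case .
qed

lemma chi_mult: assumes "finite S" "finite S'"
  shows "chi S \<omega> * chi S' \<omega> = chi ((S - S') \<union> (S' - S)) \<omega> * chi (S \<inter> S') \<omega> ^ 2"
proof -
  have 1: "chi S \<omega> = chi (S - S') \<omega> * chi (S \<inter> S') \<omega>"
    unfolding chi_def using assms by (subst prod.union_disjoint[symmetric]) (auto intro!: prod.cong)
  have 2: "chi S' \<omega> = chi (S' - S) \<omega> * chi (S \<inter> S') \<omega>"
    unfolding chi_def using assms by (subst prod.union_disjoint[symmetric]) (auto intro!: prod.cong)
  have 3: "chi ((S - S') \<union> (S' - S)) \<omega> = chi (S - S') \<omega> * chi (S' - S) \<omega>"
    unfolding chi_def using assms by (subst prod.union_disjoint) auto
  show ?thesis unfolding 1 2 3 by (simp add: power2_eq_square)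
qed

lemma pair_int:
  fixes J :: "(nat \<Rightarrow> real) \<Rightarrow> nat set" and \<Phi> :: "(nat \<Rightarrow> real) \<Rightarrow> real"
  assumes S: "finite S" "finite S'" "S \<noteq> S'" "card S = card S'"
    and Jm: "\<And>i. {\<omega>. i \<in> J \<omega>} \<in> sets Cube"
    and \<Phi>m: "\<Phi> \<in> borel_measurable Cube" and \<Phi>b: "\<And>\<omega>. \<bar>\<Phi> \<omega>\<bar> \<le> B"
    and inv: "\<And>i. AE \<omega> in Cube. i \<notin> J \<omega> \<longrightarrow> J (flp i \<omega>) = J \<omega> \<and> \<Phi> (flp i \<omega>) = \<Phi> \<omega>"
    and nz: "\<And>\<omega>. \<Phi> \<omega> \<noteq> 0 \<Longrightarrow> (S - S') \<inter> J \<omega> = {} \<or> (S' - S) \<inter> J \<omega> = {}"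
  shows "(\<integral>\<omega>. chi S \<omega> * chi S' \<omega> * \<Phi> \<omega> \<partial>Cube) = 0"
proof -
  define T where "T = (S - S') \<union> (S' - S)"
  have T: "finite T" using S unfolding T_def by auto
  have ne1: "S - S' \<noteq> {}"
  proof
    assume "S - S' = {}"
    then have "S \<subseteq> S'" by auto
    then have "S = S'" using S card_subset_eq by blast
    then show False using S by simp
  qed
  have ne2: "S' - S \<noteq> {}"
  proof
    assume "S' - S = {}"
    then have "S' \<subseteq> S" by auto
    then have "S' = S" using S card_subset_eq by metis
    then show False using S by simp
  qed
  define F where "F \<omega> = chi (S \<inter> S') \<omega> ^ 2 * \<Phi> \<omega>" for \<omega>
  have eq: "chi S \<omega> * chi S' \<omega> * \<Phi> \<omega> = chi T \<omega> * F \<omega> * indicator {\<omega>. \<not> T \<subseteq> J \<omega>} \<omega>" for \<omega>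
  proof (cases "\<Phi> \<omega> = 0")
    case True then show ?thesis by (simp add: F_def)
  next
    case False
    have "\<not> T \<subseteq> J \<omega>" using nz[OF False] ne1 ne2 unfolding T_def by auto
    then show ?thesis using chi_mult[OF S(1,2), of \<omega>] by (simp add: F_def T_def)
  qed
  have "(\<integral>\<omega>. chi T \<omega> * F \<omega> * indicator {\<omega>. \<not> T \<subseteq> J \<omega>} \<omega> \<partial>Cube) = 0"
  proof (rule master_lemma[OF T Jm])
    show "F \<in> borel_measurable Cube" unfolding F_def using \<Phi>m by measurable
    show "\<bar>F \<omega>\<bar> \<le> B" for \<omega>
    proof -
      have "\<bar>F \<omega>\<bar> = \<bar>chi (S \<inter> S') \<omega>\<bar> ^ 2 * \<bar>\<Phi> \<omega>\<bar>" by (simp add: F_def abs_mult power_abs)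
      also have "\<dots> \<le> 1 * B" using chi_sq_le \<Phi>b by (intro mult_mono) (auto simp: power_abs)
      finally show ?thesis by simp
    qed
    show "AE \<omega> in Cube. i \<notin> J \<omega> \<longrightarrow> J (flp i \<omega>) = J \<omega> \<and> F (flp i \<omega>) = F \<omega>" for i
      using inv[of i] by eventually_elim (auto simp: F_def chi_sq_flp)
  qed
  then show ?thesis by (simp add: eq)
qed

lemma ab2: "\<bar>x\<bar> \<le> 1 \<Longrightarrow> \<bar>y\<bar> \<le> 1 \<Longrightarrow> \<bar>x * y\<bar> \<le> (1::real)"
  by (simp add: abs_mult mult_le_one)

lemma SS_abstract:
  fixes J :: "(nat \<Rightarrow> real) \<Rightarrow> nat set" and f :: "(nat \<Rightarrow> real) \<Rightarrow> real"
    and \<S> :: "nat set set" and a :: "nat set \<Rightarrow> real"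
  assumes fin: "finite \<S>" and card: "\<And>S. S \<in> \<S> \<Longrightarrow> finite S \<and> card S = k" and k: "k > 0"
    and Jm: "\<And>i. {\<omega>. i \<in> J \<omega>} \<in> sets Cube"
    and fm: "f \<in> borel_measurable Cube" and fb: "\<And>\<omega>. \<bar>f \<omega>\<bar> \<le> 1"
    and inv: "\<And>i. AE \<omega> in Cube. i \<notin> J \<omega> \<longrightarrow> J (flp i \<omega>) = J \<omega> \<and> f (flp i \<omega>) = f \<omega>"
    and a: "\<And>S. S \<in> \<S> \<Longrightarrow> a S = (\<integral>\<omega>. f \<omega> * chi S \<omega> \<partial>Cube)"
  shows "(\<Sum>S\<in>\<S>. a S ^ 2) ^ 2 \<le> (\<Sum>S\<in>\<S>. a S ^ 2 * measure Cube {\<omega>. S \<inter> J \<omega> \<noteq> {}})"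
proof -
  define I where "I S \<omega> = (indicator {\<omega>. S \<inter> J \<omega> = {}} \<omega> :: real)" for S \<omega>
  have Im[measurable]: "I S \<in> borel_measurable Cube" if "finite S" for S
    unfolding I_def using sets_J_mem(3)[OF Jm that] by measurable
  have I01: "I S \<omega> = 0 \<or> I S \<omega> = 1" for S \<omega> by (simp add: I_def indicator_def)
  have Ib: "\<bar>I S \<omega>\<bar> \<le> 1" for S \<omega> by (auto simp: I_def)
  have I1b: "\<bar>1 - I S \<omega>\<bar> \<le> 1" for S \<omega> by (auto simp: I_def indicator_def)
  have Iinv: "AE \<omega> in Cube. i \<notin> J \<omega> \<longrightarrow> J (flp i \<omega>) = J \<omega> \<and> I S (flp i \<omega>) = I S \<omega>" for S i
    using inv[of i] by eventually_elim (auto simp: I_def indicator_def)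
  have cS: "finite S" "card S = k" if "S \<in> \<S>" for S using card[OF that] by auto
  have Sne: "S \<noteq> {}" if "S \<in> \<S>" for S using cS[OF that] k by auto
  define u where "u \<omega> = (\<Sum>S\<in>\<S>. a S * (chi S \<omega> * (1 - I S \<omega>)))" for \<omega>
  have um[measurable]: "u \<in> borel_measurable Cube"
    unfolding u_def using cS by (intro borel_measurable_sum) (auto intro!: borel_measurable_times)
  have ub: "\<bar>u \<omega>\<bar> \<le> (\<Sum>S\<in>\<S>. \<bar>a S\<bar>)" for \<omega>
    unfolding u_def
  proof (rule order_trans[OF sum_abs], intro sum_mono)
    fix S
    have "\<bar>chi S \<omega> * (1 - I S \<omega>)\<bar> \<le> 1"
      using abs_chi_le[of S \<omega>] I01[of S \<omega>] by (auto simp: abs_mult)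
    then show "\<bar>a S * (chi S \<omega> * (1 - I S \<omega>))\<bar> \<le> \<bar>a S\<bar>"
      by (simp add: abs_mult mult_left_le)
  qed
  have int_b: "integrable Cube h" if "h \<in> borel_measurable Cube" "\<And>\<omega>. \<bar>h \<omega>\<bar> \<le> B" for h :: "_ \<Rightarrow> real" and B
    using intb that by blast
  have term1: "(\<integral>\<omega>. f \<omega> * (chi S \<omega> * (1 - I S \<omega>)) \<partial>Cube) = a S" if S: "S \<in> \<S>" for S
  proof -
    have z: "(\<integral>\<omega>. chi S \<omega> * (f \<omega> * I S \<omega>) * indicator {\<omega>. \<not> S \<subseteq> J \<omega>} \<omega> \<partial>Cube) = 0"
    proof (rule master_lemma[OF cS(1)[OF S] Jm])
      show "(\<lambda>\<omega>. f \<omega> * I S \<omega>) \<in> borel_measurable Cube" using cS[OF S] fm by measurable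
      show "\<bar>f \<omega> * I S \<omega>\<bar> \<le> 1" for \<omega> using fb[of \<omega>] I01[of S \<omega>] by (auto simp: abs_mult)
      show "AE \<omega> in Cube. i \<notin> J \<omega> \<longrightarrow> J (flp i \<omega>) = J \<omega> \<and> f (flp i \<omega>) * I S (flp i \<omega>) = f \<omega> * I S \<omega>" for i
        using inv[of i] Iinv[of i S] by eventually_elim auto
    qed
    have e: "chi S \<omega> * (f \<omega> * I S \<omega>) * indicator {\<omega>. \<not> S \<subseteq> J \<omega>} \<omega> = f \<omega> * chi S \<omega> * I S \<omega>" for \<omega>
      using Sne[OF S] by (auto simp: I_def indicator_def)
    have i1: "integrable Cube (\<lambda>\<omega>. f \<omega> * chi S \<omega>)"
      by (rule int_b[where B=1]) (use cS[OF S] fm fb abs_chi_le in \<open>auto intro!: ab2 simp: Ib I1b\<close>)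
    have i2: "integrable Cube (\<lambda>\<omega>. f \<omega> * chi S \<omega> * I S \<omega>)"
      by (rule int_b[where B=1]) (use cS[OF S] fm fb abs_chi_le I01 in \<open>auto intro!: ab2 simp: Ib I1b\<close>)
    have "(\<integral>\<omega>. f \<omega> * (chi S \<omega> * (1 - I S \<omega>)) \<partial>Cube) = (\<integral>\<omega>. f \<omega> * chi S \<omega> - f \<omega> * chi S \<omega> * I S \<omega> \<partial>Cube)"
      by (simp add: algebra_simps)
    also have "\<dots> = (\<integral>\<omega>. f \<omega> * chi S \<omega> \<partial>Cube) - (\<integral>\<omega>. f \<omega> * chi S \<omega> * I S \<omega> \<partial>Cube)"
      by (rule Bochner_Integration.integral_diff[OF i1 i2])
    also have "(\<integral>\<omega>. f \<omega> * chi S \<omega> * I S \<omega> \<partial>Cube) = 0" using z by (simp add: e)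
    finally show ?thesis using a[OF S] by simp
  qed
  have fu: "(\<integral>\<omega>. f \<omega> * u \<omega> \<partial>Cube) = (\<Sum>S\<in>\<S>. a S ^ 2)"
  proof -
    have "(\<integral>\<omega>. f \<omega> * u \<omega> \<partial>Cube) = (\<integral>\<omega>. (\<Sum>S\<in>\<S>. a S * (f \<omega> * (chi S \<omega> * (1 - I S \<omega>)))) \<partial>Cube)"
      unfolding u_def by (simp add: sum_distrib_left algebra_simps)
    also have "\<dots> = (\<Sum>S\<in>\<S>. a S * (\<integral>\<omega>. f \<omega> * (chi S \<omega> * (1 - I S \<omega>)) \<partial>Cube))"
    proof (subst Bochner_Integration.integral_sum)
      fix S assume S: "S \<in> \<S>"
      show "integrable Cube (\<lambda>\<omega>. a S * (f \<omega> * (chi S \<omega> * (1 - I S \<omega>))))"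
        by (intro integrable_mult_right int_b[where B=1])
          (use cS[OF S] fm fb abs_chi_le I01 in \<open>auto intro!: ab2 simp: Ib I1b\<close>)
    qed simp
    also have "\<dots> = (\<Sum>S\<in>\<S>. a S ^ 2)" by (intro sum.cong refl) (simp add: term1 power2_eq_square)
    finally show ?thesis .
  qed
  define J0 where "J0 = (\<lambda>\<omega>::nat \<Rightarrow> real. {} :: nat set)"
  have J0m: "{\<omega>. i \<in> J0 \<omega>} \<in> sets Cube" for i by (simp add: J0_def)
  have V: "(\<integral>\<omega>. chi S \<omega> * chi S' \<omega> * ((1 - I S \<omega>) * (1 - I S' \<omega>)) \<partial>Cube)
      = (if S = S' then measure Cube {\<omega>. S \<inter> J \<omega> \<noteq> {}} else 0)" if S: "S \<in> \<S>" "S' \<in> \<S>" for S S'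
  proof (cases "S = S'")
    case True
    have "(\<integral>\<omega>. chi S \<omega> * chi S' \<omega> * ((1 - I S \<omega>) * (1 - I S' \<omega>)) \<partial>Cube)
        = (\<integral>\<omega>. indicator {\<omega>. S \<inter> J \<omega> \<noteq> {}} \<omega> \<partial>Cube)"
    proof (rule integral_cong_AE)
      show "(\<lambda>\<omega>. chi S \<omega> * chi S' \<omega> * ((1 - I S \<omega>) * (1 - I S' \<omega>))) \<in> borel_measurable Cube"
        using cS[OF S(1)] cS[OF S(2)] by measurable
      show "(\<lambda>\<omega>. indicator {\<omega>. S \<inter> J \<omega> \<noteq> {}} \<omega> :: real) \<in> borel_measurable Cube"
        using sets_J_mem(4)[OF Jm cS(1)[OF S(1)]] by measurable
      show "AE \<omega> in Cube. chi S \<omega> * chi S' \<omega> * ((1 - I S \<omega>) * (1 - I S' \<omega>)) = indicator {\<omega>. S \<inter> J \<omega> \<noteq> {}} \<omega>"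
        using chi_sq_AE[of S]
      proof eventually_elim
        case (elim \<omega>)
        then show ?case using True by (auto simp: I_def indicator_def power2_eq_square)
      qed
    qed
    also have "\<dots> = measure Cube {\<omega>. S \<inter> J \<omega> \<noteq> {}}"
      using sets_J_mem(4)[OF Jm cS(1)[OF S(1)]] by simp
    finally show ?thesis using True by simp
  next
    case False
    have cc: "card S = card S'" using cS[OF S(1)] cS[OF S(2)] by simp
    have fS: "finite S" "finite S'" using cS S by auto
    have "(\<integral>\<omega>. chi S \<omega> * chi S' \<omega> * ((1 - I S \<omega>) * (1 - I S' \<omega>)) \<partial>Cube)
       = (\<integral>\<omega>. chi S \<omega> * chi S' \<omega> * 1 - chi S \<omega> * chi S' \<omega> * I S' \<omega>
            - chi S \<omega> * chi S' \<omega> * I S \<omega> + chi S \<omega> * chi S' \<omega> * (I S \<omega> * I S' \<omega>) \<partial>Cube)"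
      by (simp add: algebra_simps)
    also have "\<dots> = (\<integral>\<omega>. chi S \<omega> * chi S' \<omega> * 1 \<partial>Cube) - (\<integral>\<omega>. chi S \<omega> * chi S' \<omega> * I S' \<omega> \<partial>Cube)
            - (\<integral>\<omega>. chi S \<omega> * chi S' \<omega> * I S \<omega> \<partial>Cube) + (\<integral>\<omega>. chi S \<omega> * chi S' \<omega> * (I S \<omega> * I S' \<omega>) \<partial>Cube)"
    proof -
      have bnd: "\<bar>chi S \<omega> * chi S' \<omega> * x\<bar> \<le> 1" if "\<bar>x\<bar> \<le> 1" for \<omega> x
        using abs_chi_le[of S \<omega>] abs_chi_le[of S' \<omega>] that by (auto simp: abs_mult intro!: mult_le_one)
      have i0: "integrable Cube (\<lambda>\<omega>. chi S \<omega> * chi S' \<omega> * 1)"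
        by (rule int_b[where B=1]) (use bnd[of 1] in auto)
      have i1: "integrable Cube (\<lambda>\<omega>. chi S \<omega> * chi S' \<omega> * I S' \<omega>)"
        by (rule int_b[where B=1]) (use bnd Ib fS in auto)
      have i2: "integrable Cube (\<lambda>\<omega>. chi S \<omega> * chi S' \<omega> * I S \<omega>)"
        by (rule int_b[where B=1]) (use bnd Ib fS in auto)
      have i3: "integrable Cube (\<lambda>\<omega>. chi S \<omega> * chi S' \<omega> * (I S \<omega> * I S' \<omega>))"
        by (rule int_b[where B=1]) (use bnd Ib fS I01 abs_chi_le in \<open>auto simp: abs_mult intro!: mult_le_one\<close>)
      show ?thesis using i0 i1 i2 i3 by simp
    qed
    also have "(\<integral>\<omega>. chi S \<omega> * chi S' \<omega> * 1 \<partial>Cube) = 0"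
      by (rule pair_int[OF fS False cc J0m, where B=1]) (auto simp: J0_def)
    also have "(\<integral>\<omega>. chi S \<omega> * chi S' \<omega> * I S' \<omega> \<partial>Cube) = 0"
    proof (rule pair_int[OF fS False cc Jm, where B=1])
      show "I S' \<in> borel_measurable Cube" using fS by measurable
      show "(S - S') \<inter> J \<omega> = {} \<or> (S' - S) \<inter> J \<omega> = {}" if "I S' \<omega> \<noteq> 0" for \<omega>
        using that by (auto simp: I_def indicator_def split: if_splits)
    qed (use Iinv Ib in auto)
    also have "(\<integral>\<omega>. chi S \<omega> * chi S' \<omega> * I S \<omega> \<partial>Cube) = 0"
    proof (rule pair_int[OF fS False cc Jm, where B=1])
      show "I S \<in> borel_measurable Cube" using fS by measurable
      show "(S - S') \<inter> J \<omega> = {} \<or> (S' - S) \<inter> J \<omega> = {}" if "I S \<omega> \<noteq> 0" for \<omega>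
        using that by (auto simp: I_def indicator_def split: if_splits)
    qed (use Iinv Ib in auto)
    also have "(\<integral>\<omega>. chi S \<omega> * chi S' \<omega> * (I S \<omega> * I S' \<omega>) \<partial>Cube) = 0"
    proof (rule pair_int[OF fS False cc Jm, where B=1])
      show "(\<lambda>\<omega>. I S \<omega> * I S' \<omega>) \<in> borel_measurable Cube" using fS by measurable
      show "\<bar>I S \<omega> * I S' \<omega>\<bar> \<le> 1" for \<omega> using I01[of S \<omega>] I01[of S' \<omega>] by auto
      show "AE \<omega> in Cube. i \<notin> J \<omega> \<longrightarrow> J (flp i \<omega>) = J \<omega> \<and> I S (flp i \<omega>) * I S' (flp i \<omega>) = I S \<omega> * I S' \<omega>" for i
        using Iinv[of i S] Iinv[of i S'] by eventually_elim auto
      show "(S - S') \<inter> J \<omega> = {} \<or> (S' - S) \<inter> J \<omega> = {}" if "I S \<omega> * I S' \<omega> \<noteq> 0" for \<omega>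
        using that by (auto simp: I_def indicator_def split: if_splits)
    qed
    finally show ?thesis using False by simp
  qed
  have uu: "(\<integral>\<omega>. u \<omega> ^ 2 \<partial>Cube) = (\<Sum>S\<in>\<S>. a S ^ 2 * measure Cube {\<omega>. S \<inter> J \<omega> \<noteq> {}})"
  proof -
    have bnd: "\<bar>a S * a S' * (chi S \<omega> * chi S' \<omega> * ((1 - I S \<omega>) * (1 - I S' \<omega>)))\<bar> \<le> \<bar>a S * a S'\<bar>" for S S' \<omega>
    proof -
      have "\<bar>chi S \<omega> * chi S' \<omega> * ((1 - I S \<omega>) * (1 - I S' \<omega>))\<bar> \<le> 1"
        by (intro ab2 abs_chi_le I1b)
      then show ?thesis by (simp add: abs_mult mult_left_le)
    qed
    have "(\<integral>\<omega>. u \<omega> ^ 2 \<partial>Cube) = (\<integral>\<omega>. (\<Sum>S\<in>\<S>. \<Sum>S'\<in>\<S>. a S * a S' * (chi S \<omega> * chi S' \<omega> * ((1 - I S \<omega>) * (1 - I S' \<omega>)))) \<partial>Cube)"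
      unfolding u_def power2_eq_square sum_product by (intro Bochner_Integration.integral_cong refl sum.cong) (simp add: algebra_simps)
    also have "\<dots> = (\<Sum>S\<in>\<S>. \<Sum>S'\<in>\<S>. a S * a S' * (\<integral>\<omega>. chi S \<omega> * chi S' \<omega> * ((1 - I S \<omega>) * (1 - I S' \<omega>)) \<partial>Cube))"
    proof (subst Bochner_Integration.integral_sum, goal_cases)
      case (1 S)
      show ?case
      proof (rule Bochner_Integration.integrable_sum)
        fix S' assume "S' \<in> \<S>"
        show "integrable Cube (\<lambda>\<omega>. a S * a S' * (chi S \<omega> * chi S' \<omega> * ((1 - I S \<omega>) * (1 - I S' \<omega>))))"
          by (rule int_b[OF _ bnd]) (use cS 1 \<open>S' \<in> \<S>\<close> in measurable)
      qed
    next
      case 2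
      show ?case
      proof (intro sum.cong refl, subst Bochner_Integration.integral_sum)
        fix S S' assume "S \<in> \<S>" "S' \<in> \<S>"
        show "integrable Cube (\<lambda>\<omega>. a S * a S' * (chi S \<omega> * chi S' \<omega> * ((1 - I S \<omega>) * (1 - I S' \<omega>))))"
          by (rule int_b[OF _ bnd]) (use cS \<open>S \<in> \<S>\<close> \<open>S' \<in> \<S>\<close> in measurable)
      qed simp
    qed
    also have "\<dots> = (\<Sum>S\<in>\<S>. \<Sum>S'\<in>\<S>. if S = S' then a S ^ 2 * measure Cube {\<omega>. S \<inter> J \<omega> \<noteq> {}} else 0)"
      by (intro sum.cong refl) (simp add: V power2_eq_square)
    also have "\<dots> = (\<Sum>S\<in>\<S>. a S ^ 2 * measure Cube {\<omega>. S \<inter> J \<omega> \<noteq> {}})"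
      using fin by (intro sum.cong refl) (simp add: sum.delta)
    finally show ?thesis .
  qed
  have A: "(\<Sum>S\<in>\<S>. a S ^ 2) \<le> (\<integral>\<omega>. \<bar>u \<omega>\<bar> \<partial>Cube)"
  proof -
    have "(\<Sum>S\<in>\<S>. a S ^ 2) = (\<integral>\<omega>. f \<omega> * u \<omega> \<partial>Cube)" using fu by simp
    also have "\<dots> \<le> (\<integral>\<omega>. \<bar>u \<omega>\<bar> \<partial>Cube)"
    proof (rule integral_mono)
      show "integrable Cube (\<lambda>\<omega>. f \<omega> * u \<omega>)"
        by (rule int_b[where B="\<Sum>S\<in>\<S>. \<bar>a S\<bar>"]) (use fm fb ub in \<open>auto simp: abs_mult intro: mult_le_one[where b="\<bar>u _\<bar>", THEN order_trans] mult_mono[of _ 1 _ "\<Sum>S\<in>\<S>. \<bar>a S\<bar>", simplified]\<close>)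
      show "integrable Cube (\<lambda>\<omega>. \<bar>u \<omega>\<bar>)" by (rule int_b[where B="\<Sum>S\<in>\<S>. \<bar>a S\<bar>"]) (use ub in auto)
      show "f \<omega> * u \<omega> \<le> \<bar>u \<omega>\<bar>" for \<omega>
      proof -
        have "f \<omega> * u \<omega> \<le> \<bar>f \<omega>\<bar> * \<bar>u \<omega>\<bar>" by (metis abs_ge_self abs_mult)
        also have "\<dots> \<le> 1 * \<bar>u \<omega>\<bar>" using fb by (intro mult_right_mono) auto
        finally show ?thesis by simp
      qed
    qed
    finally show ?thesis .
  qed
  have B: "(\<integral>\<omega>. \<bar>u \<omega>\<bar> \<partial>Cube) ^ 2 \<le> (\<integral>\<omega>. u \<omega> ^ 2 \<partial>Cube)"
  proof -
    have i1: "integrable Cube (\<lambda>\<omega>. \<bar>u \<omega>\<bar>)" by (rule int_b[where B="\<Sum>S\<in>\<S>. \<bar>a S\<bar>"]) (use ub in auto)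
    have i2: "integrable Cube (\<lambda>\<omega>. \<bar>u \<omega>\<bar> ^ 2)"
      by (rule int_b[where B="(\<Sum>S\<in>\<S>. \<bar>a S\<bar>)^2"]) (simp_all, metis abs_ge_zero power2_abs power_mono ub)
    have "0 \<le> C.variance (\<lambda>\<omega>. \<bar>u \<omega>\<bar>)" by (rule Bochner_Integration.integral_nonneg) simp
    also have "C.variance (\<lambda>\<omega>. \<bar>u \<omega>\<bar>) = (\<integral>\<omega>. \<bar>u \<omega>\<bar> ^ 2 \<partial>Cube) - (\<integral>\<omega>. \<bar>u \<omega>\<bar> \<partial>Cube) ^ 2"
      by (rule C.variance_eq[OF i1 i2])
    finally show ?thesis by simp
  qed
  have "0 \<le> (\<Sum>S\<in>\<S>. a S ^ 2)" by (intro sum_nonneg) simp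
  then have "(\<Sum>S\<in>\<S>. a S ^ 2) ^ 2 \<le> (\<integral>\<omega>. \<bar>u \<omega>\<bar> \<partial>Cube) ^ 2" using A by (intro power_mono) auto
  also have "\<dots> \<le> (\<integral>\<omega>. u \<omega> ^ 2 \<partial>Cube)" by (rule B)
  finally show ?thesis using uu by simp
qed

lemma Cube_compl[intro]: "X \<in> sets Cube \<Longrightarrow> UNIV - X \<in> sets Cube"
  by (metis space_Cube sets.compl_sets)

lemma witness_cyl: "witness f W \<omega> \<longleftrightarrow> (\<exists>A\<in>sets Cube. measure Cube A = 1 \<and> (\<forall>\<omega>'\<in>A. \<omega>' \<in> cyl W \<omega> \<longrightarrow> f \<omega>' = f \<omega>))"
  by (simp add: witness_def cyl_def)

lemma cyl_pos: "finite W \<Longrightarrow> \<forall>i\<in>W. x i \<in> {-1, 1} \<Longrightarrow> measure Cube (cyl W x) > 0"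
  by (simp add: measure_cyl)

lemma wit_unique:
  assumes W: "finite W" "\<forall>i\<in>W. x i \<in> {-1, 1}"
    and c: "AE \<omega>' in Cube. \<omega>' \<in> cyl W x \<longrightarrow> g \<omega>' = c"
    and c': "AE \<omega>' in Cube. \<omega>' \<in> cyl W x \<longrightarrow> g \<omega>' = c'"
  shows "c = c'"
proof (rule ccontr)
  assume ne: "c \<noteq> c'"
  have "AE \<omega>' in Cube. \<omega>' \<notin> cyl W x" using c c' by eventually_elim (use ne in auto)
  then have "measure Cube (cyl W x) = 0" using C.prob_eq_0[OF sets_cyl[OF W(1)]] by simp
  then show False using cyl_pos[OF W] by simp
qed

lemma witness_iff:
  assumes fm: "f \<in> borel_measurable Cube" and W: "finite W" "\<forall>i\<in>W. \<omega> i \<in> {-1, 1}"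
  shows "witness f W \<omega> \<longleftrightarrow> (AE \<omega>' in Cube. \<omega>' \<in> cyl W \<omega> \<longrightarrow> f \<omega>' = f \<omega>)"
proof
  assume "witness f W \<omega>"
  then obtain A where A: "A \<in> sets Cube" "measure Cube A = 1" "\<forall>\<omega>'\<in>A. \<omega>' \<in> cyl W \<omega> \<longrightarrow> f \<omega>' = f \<omega>"
    unfolding witness_cyl by blast
  have "AE \<omega>' in Cube. \<omega>' \<in> A" by (rule C.AE_prob_1[OF A(2)])
  then show "AE \<omega>' in Cube. \<omega>' \<in> cyl W \<omega> \<longrightarrow> f \<omega>' = f \<omega>" by eventually_elim (use A in auto)
next
  assume ae: "AE \<omega>' in Cube. \<omega>' \<in> cyl W \<omega> \<longrightarrow> f \<omega>' = f \<omega>"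
  define A where "A = {\<omega>'. \<omega>' \<in> cyl W \<omega> \<longrightarrow> f \<omega>' = f \<omega>}"
  have A: "A \<in> sets Cube"
  proof -
    have "A = (space Cube - cyl W \<omega>) \<union> (f -` {f \<omega>} \<inter> space Cube)" unfolding A_def by auto
    moreover have "f -` {f \<omega>} \<inter> space Cube \<in> sets Cube" using fm by (rule measurable_sets) simp
    ultimately show ?thesis using Cube_compl[OF sets_cyl[OF W(1)]] by auto
  qed
  have "measure Cube A = 1" using C.prob_eq_1[OF A] ae unfolding A_def by simp
  then show "witness f W \<omega>" unfolding witness_cyl using A by (auto simp: A_def)
qed

lemma witness_nonpm:
  assumes W: "finite W" and n: "\<not> (\<forall>i\<in>W. \<omega> i \<in> {-1, 1})"
  shows "witness f W \<omega>"
proof -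
  have m0: "measure Cube (cyl W \<omega>) = 0" using n by (simp add: measure_cyl[OF W])
  have "measure Cube (space Cube - cyl W \<omega>) = 1"
    using C.prob_compl[OF sets_cyl[OF W]] m0 by simp
  then show ?thesis unfolding witness_cyl
    by (intro bexI[of _ "space Cube - cyl W \<omega>"]) (auto intro: Cube_compl sets_cyl[OF W])
qed

lemma witness_mono: "witness f W \<omega> \<Longrightarrow> W \<subseteq> W' \<Longrightarrow> witness f W' \<omega>"
  unfolding witness_def by blast

definition wit' :: "((nat \<Rightarrow> real) \<Rightarrow> real) \<Rightarrow> nat set \<Rightarrow> (nat \<Rightarrow> real) \<Rightarrow> bool" where
  "wit' f W \<omega> \<longleftrightarrow> (\<exists>c. AE \<omega>' in Cube. \<omega>' \<in> cyl W \<omega> \<longrightarrow> f \<omega>' = c)"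

lemma cyl_restrict: "cyl W (restrict \<omega> W) = cyl W \<omega>" by (auto simp: cyl_def)

lemma good_W:
  assumes fm: "f \<in> borel_measurable Cube" and W: "finite W"
  shows "AE \<omega> in Cube. witness f W \<omega> \<longleftrightarrow> wit' f W \<omega>"
proof -
  define P where "P = Pi\<^sub>E W (\<lambda>_. {-1, 1::real})"
  have Pfin: "finite P" unfolding P_def using W by (intro finite_PiE) auto
  define c where "c x = (SOME c. AE \<omega>' in Cube. \<omega>' \<in> cyl W x \<longrightarrow> f \<omega>' = c)" for x
  have ae: "AE \<omega> in Cube. \<forall>x\<in>P. wit' f W x \<longrightarrow> (\<omega> \<in> cyl W x \<longrightarrow> f \<omega> = c x)"
  proof (rule AE_finite_allI[OF Pfin])
    fix x assume "x \<in> P"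
    show "AE \<omega> in Cube. wit' f W x \<longrightarrow> (\<omega> \<in> cyl W x \<longrightarrow> f \<omega> = c x)"
    proof (cases "wit' f W x")
      case True
      then have "AE \<omega>' in Cube. \<omega>' \<in> cyl W x \<longrightarrow> f \<omega>' = c x"
        unfolding wit'_def c_def by (rule someI_ex)
      then show ?thesis by simp
    qed simp
  qed
  show ?thesis using ae AE_pm
  proof eventually_elim
    case (elim \<omega>)
    have pmW: "\<forall>i\<in>W. \<omega> i \<in> {-1, 1}" using elim(2) by auto
    show ?case
    proof
      assume "witness f W \<omega>"
      then show "wit' f W \<omega>" using witness_iff[OF fm W pmW] unfolding wit'_def by blast
    next
      assume w: "wit' f W \<omega>"
      define x where "x = restrict \<omega> W"
      have xP: "x \<in> P" unfolding x_def P_def using pmW by auto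
      have cx: "cyl W x = cyl W \<omega>" unfolding x_def by (rule cyl_restrict)
      have "\<omega> \<in> cyl W \<omega>" by (simp add: cyl_def)
      then have fx: "f \<omega> = c x" using elim(1) xP w cx unfolding wit'_def by auto
      have "AE \<omega>' in Cube. \<omega>' \<in> cyl W x \<longrightarrow> f \<omega>' = c x"
        using someI_ex[OF w[unfolded wit'_def]] cx by (simp add: c_def)
      then show "witness f W \<omega>" using witness_iff[OF fm W pmW] fx cx by simp
    qed
  qed
qed

lemma good_all:
  assumes fm: "f \<in> borel_measurable Cube"
  shows "AE \<omega> in Cube. \<forall>W. finite W \<longrightarrow> (witness f W \<omega> \<longleftrightarrow> wit' f W \<omega>)"
proof -
  have "AE \<omega> in Cube. \<forall>W\<in>{W. finite W}. (witness f W \<omega> \<longleftrightarrow> wit' f W \<omega>)"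
    by (rule AE_ball_countable[THEN iffD2]) (auto intro: countable_Collect_finite good_W[OF fm])
  then show ?thesis by simp
qed

lemma queried_0[simp]: "queried q \<rho> \<omega> 0 = {}" by (simp add: queried_def)

lemma queried_Suc: "queried q \<rho> \<omega> (Suc k) = insert (q \<rho> (hist q \<rho> \<omega> k)) (queried q \<rho> \<omega> k)"
  by (auto simp: queried_def)

lemma finite_queried[simp]: "finite (queried q \<rho> \<omega> k)" by (simp add: queried_def)

lemma queried_mono: "k \<le> k' \<Longrightarrow> queried q \<rho> \<omega> k \<subseteq> queried q \<rho> \<omega> k'"
proof (induction k' rule: dec_induct)
  case (step n) then show ?case by (auto simp: queried_Suc)
qed simp

lemma hist_flp: "i \<notin> queried q \<rho> \<omega> k \<Longrightarrow> hist q \<rho> (flp i \<omega>) k = hist q \<rho> \<omega> k"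
proof (induction k)
  case (Suc k)
  have ni: "i \<notin> queried q \<rho> \<omega> k" "q \<rho> (hist q \<rho> \<omega> k) \<noteq> i" using Suc.prems by (auto simp: queried_Suc)
  then show ?case using Suc.IH by (simp add: flp_apply)
qed simp

lemma queried_flp: "i \<notin> queried q \<rho> \<omega> k \<Longrightarrow> queried q \<rho> (flp i \<omega>) k = queried q \<rho> \<omega> k"
  by (simp add: queried_def hist_flp)

lemma cyl_flp: "i \<notin> W \<Longrightarrow> cyl W (flp i \<omega>) = cyl W \<omega>"
  by (auto simp: cyl_def flp_apply)

lemma wit'_flp: "i \<notin> W \<Longrightarrow> wit' f W (flp i \<omega>) = wit' f W \<omega>"
  by (simp add: wit'_def cyl_flp)

lemma alg_inv:
  assumes fm: "f \<in> borel_measurable Cube"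
    and trm: "AE \<omega> in Cube. \<exists>k. witness f (queried q \<rho> \<omega> k) \<omega>"
  shows "AE \<omega> in Cube. i \<notin> alg_W f q \<omega> \<rho> \<longrightarrow> alg_W f q (flp i \<omega>) \<rho> = alg_W f q \<omega> \<rho> \<and> f (flp i \<omega>) = f \<omega>"
  using good_all[OF fm] AE_flp[OF good_all[OF fm], of i] trm AE_pm AE_flp[OF AE_pm, of i]
proof eventually_elim
  case (elim \<omega>)
  show ?case
  proof
    assume iJ: "i \<notin> alg_W f q \<omega> \<rho>"
    define \<tau> where "\<tau> = stop_time f q \<omega> \<rho>"
    have J: "alg_W f q \<omega> \<rho> = queried q \<rho> \<omega> \<tau>" by (simp add: alg_W_def \<tau>_def)
    have w\<tau>: "witness f (queried q \<rho> \<omega> \<tau>) \<omega>"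
      unfolding \<tau>_def stop_time_def using elim(3) by (rule LeastI_ex)
    have eqk: "queried q \<rho> (flp i \<omega>) k = queried q \<rho> \<omega> k \<and>
        (witness f (queried q \<rho> (flp i \<omega>) k) (flp i \<omega>) \<longleftrightarrow> witness f (queried q \<rho> \<omega> k) \<omega>)" if "k \<le> \<tau>" for k
    proof -
      have ik: "i \<notin> queried q \<rho> \<omega> k" using queried_mono[OF that] iJ J by auto
      have qe: "queried q \<rho> (flp i \<omega>) k = queried q \<rho> \<omega> k" by (rule queried_flp[OF ik])
      have "witness f (queried q \<rho> (flp i \<omega>) k) (flp i \<omega>) \<longleftrightarrow> wit' f (queried q \<rho> \<omega> k) (flp i \<omega>)"
        using elim(2) qe by simp
      also have "\<dots> \<longleftrightarrow> wit' f (queried q \<rho> \<omega> k) \<omega>" by (rule wit'_flp[OF ik])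
      also have "\<dots> \<longleftrightarrow> witness f (queried q \<rho> \<omega> k) \<omega>" using elim(1) by simp
      finally show ?thesis using qe by simp
    qed
    have \<tau>': "stop_time f q (flp i \<omega>) \<rho> = \<tau>"
      unfolding stop_time_def
    proof (rule Least_equality)
      show "witness f (queried q \<rho> (flp i \<omega>) \<tau>) (flp i \<omega>)" using eqk[OF order_refl] w\<tau> by metis
      fix k assume wk: "witness f (queried q \<rho> (flp i \<omega>) k) (flp i \<omega>)"
      show "\<tau> \<le> k"
      proof (rule ccontr)
        assume "\<not> \<tau> \<le> k"
        then have "k < \<tau>" by simp
        then have "witness f (queried q \<rho> \<omega> k) \<omega>" using eqk[of k] wk by simp
        then have "\<tau> \<le> k" unfolding \<tau>_def stop_time_def by (rule Least_le)
        then show False using \<open>k < \<tau>\<close> by simp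
      qed
    qed
    have Jeq: "alg_W f q (flp i \<omega>) \<rho> = alg_W f q \<omega> \<rho>"
      using eqk[of \<tau>] \<tau>' J by (simp add: alg_W_def)
    define W where "W = alg_W f q \<omega> \<rho>"
    have W: "finite W" by (simp add: W_def J)
    have pmW: "\<forall>j\<in>W. \<omega> j \<in> {-1, 1}" "\<forall>j\<in>W. flp i \<omega> j \<in> {-1, 1}" using elim(4,5) by auto
    have w1: "witness f W \<omega>" using w\<tau> J by (simp add: W_def)
    have wf: "witness f (queried q \<rho> (flp i \<omega>) \<tau>) (flp i \<omega>)" using eqk[OF order_refl] w\<tau> by metis
    have qf: "queried q \<rho> (flp i \<omega>) \<tau> = W" using eqk[OF order_refl] J by (simp add: W_def)
    have w2: "witness f W (flp i \<omega>)" using wf qf by simp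
    have iW: "i \<notin> W" using iJ by (simp add: W_def)
    have a1: "AE \<omega>' in Cube. \<omega>' \<in> cyl W \<omega> \<longrightarrow> f \<omega>' = f \<omega>" using w1 witness_iff[OF fm W pmW(1)] by simp
    have a2: "AE \<omega>' in Cube. \<omega>' \<in> cyl W \<omega> \<longrightarrow> f \<omega>' = f (flp i \<omega>)"
      using w2 witness_iff[OF fm W pmW(2)] cyl_flp[OF iW] by simp
    have "f (flp i \<omega>) = f \<omega>" using wit_unique[OF W pmW(1) a2 a1] .
    then show "alg_W f q (flp i \<omega>) \<rho> = alg_W f q \<omega> \<rho> \<and> f (flp i \<omega>) = f \<omega>" using Jeq by simp
  qed
qed

interpretation CC: pair_prob_space Cube Cube by unfold_locales

definition fhat :: "((nat \<Rightarrow> real) \<Rightarrow> real) \<Rightarrow> nat set \<Rightarrow> real" where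
  "fhat f S = (\<integral>\<omega>. f \<omega> * chi S \<omega> \<partial>Cube)"

lemma boolean_fun_bounds:
  assumes "boolean_fun f"
  shows "f \<in> borel_measurable Cube" "\<And>\<omega>. \<bar>f \<omega>\<bar> \<le> 1"
  using assms by (auto simp: boolean_fun_def) (metis abs_minus_cancel abs_one order_refl)

lemma space_CC[simp]: "space (Cube \<Otimes>\<^sub>M Cube) = UNIV"
  by (simp add: space_pair_measure)

lemma AE_swap_pair:
  assumes "AE p in Cube \<Otimes>\<^sub>M Cube. P p"
  shows "AE \<rho> in Cube. AE \<omega> in Cube. P (\<omega>, \<rho>)"
proof -
  have "AE p in distr (Cube \<Otimes>\<^sub>M Cube) (Cube \<Otimes>\<^sub>M Cube) (\<lambda>(x, y). (y, x)). P p"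
    using assms CC.distr_pair_swap by metis
  then have "AE p in Cube \<Otimes>\<^sub>M Cube. P ((\<lambda>(x, y). (y, x)) p)"
    by (rule AE_distrD[rotated]) (rule measurable_pair_swap')
  then have "AE x in Cube. AE y in Cube. P ((\<lambda>(x, y). (y, x)) (x, y))" by (rule CC.AE_pair)
  then show ?thesis by simp
qed

lemma section_sets:
  assumes "X \<in> sets (Cube \<Otimes>\<^sub>M Cube)"
  shows "{\<omega>. (\<omega>, \<rho>) \<in> X} \<in> sets Cube"
proof -
  have "(\<lambda>\<omega>. (\<omega>, \<rho>)) -` X \<inter> space Cube \<in> sets Cube"
    by (rule measurable_sets[OF measurable_Pair2' assms]) simp
  then show ?thesis by (simp add: vimage_def)
qed

lemma measure_section_integral:
  assumes X: "X \<in> sets (Cube \<Otimes>\<^sub>M Cube)"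
  shows "(\<lambda>\<rho>. measure Cube {\<omega>. (\<omega>, \<rho>) \<in> X}) \<in> borel_measurable Cube"
    "integrable Cube (\<lambda>\<rho>. measure Cube {\<omega>. (\<omega>, \<rho>) \<in> X})"
    "measure (Cube \<Otimes>\<^sub>M Cube) X = (\<integral>\<rho>. measure Cube {\<omega>. (\<omega>, \<rho>) \<in> X} \<partial>Cube)"
proof -
  have e: "(\<lambda>x. (x, y)) -` X = {\<omega>. (\<omega>, y) \<in> X}" for y by auto
  have m1: "(\<lambda>\<rho>. emeasure Cube {\<omega>. (\<omega>, \<rho>) \<in> X}) \<in> borel_measurable Cube"
    using CC.measurable_emeasure_Pair2[OF X] by (simp add: e)
  have em: "emeasure Cube {\<omega>. (\<omega>, \<rho>) \<in> X} = ennreal (measure Cube {\<omega>. (\<omega>, \<rho>) \<in> X})" for \<rho>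
    by (simp add: C.emeasure_eq_measure)
  show m2: "(\<lambda>\<rho>. measure Cube {\<omega>. (\<omega>, \<rho>) \<in> X}) \<in> borel_measurable Cube"
    using m1 unfolding em by simp
  show "integrable Cube (\<lambda>\<rho>. measure Cube {\<omega>. (\<omega>, \<rho>) \<in> X})"
    by (rule intb[OF m2, where B=1]) simp
  have "measure (Cube \<Otimes>\<^sub>M Cube) X = enn2real (emeasure (Cube \<Otimes>\<^sub>M Cube) X)" by (simp add: measure_def)
  also have "emeasure (Cube \<Otimes>\<^sub>M Cube) X = (\<integral>\<^sup>+\<rho>. emeasure Cube {\<omega>. (\<omega>, \<rho>) \<in> X} \<partial>Cube)"
    using CC.emeasure_pair_measure_alt2[OF X] by (simp add: e)
  also have "enn2real \<dots> = (\<integral>\<rho>. measure Cube {\<omega>. (\<omega>, \<rho>) \<in> X} \<partial>Cube)"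
    by (rule enn2real_nn_integral_eq_integral) (auto simp: em m2)
  finally show "measure (Cube \<Otimes>\<^sub>M Cube) X = (\<integral>\<rho>. measure Cube {\<omega>. (\<omega>, \<rho>) \<in> X} \<partial>Cube)" .
qed

lemma reveal_prob_le1: "reveal_prob f q i \<le> 1"
  unfolding reveal_prob_def by (rule CC.prob_le_1)

lemma reveal_prob_ge0: "reveal_prob f q i \<ge> 0"
  unfolding reveal_prob_def by simp

lemma reveal_le_SUP: "reveal_prob f q i \<le> (SUP i. reveal_prob f q i)"
  by (rule cSUP_upper) (auto intro!: bdd_aboveI[where M=1] simp: reveal_prob_le1)

lemma SS_alg:
  assumes bf: "boolean_fun f" and va: "valid_alg f q"
    and fin: "finite \<S>" and card: "\<And>S. S \<in> \<S> \<Longrightarrow> finite S \<and> card S = k" and k: "k > 0"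
  shows "(\<Sum>S\<in>\<S>. fhat f S ^ 2) \<le> real k * (SUP i. reveal_prob f q i)"
proof -
  note fm = boolean_fun_bounds(1)[OF bf] and fb = boolean_fun_bounds(2)[OF bf]
  define \<delta> where "\<delta> = (SUP i. reveal_prob f q i)"
  define X where "X i = {p \<in> space (Cube \<Otimes>\<^sub>M Cube). i \<in> alg_W f q (fst p) (snd p)}" for i
  have Xs: "X i \<in> sets (Cube \<Otimes>\<^sub>M Cube)" for i using va unfolding valid_alg_def X_def by blast
  have secX: "{\<omega>. (\<omega>, \<rho>) \<in> X i} = {\<omega>. i \<in> alg_W f q \<omega> \<rho>}" for i \<rho> by (simp add: X_def)
  have Jm: "{\<omega>. i \<in> alg_W f q \<omega> \<rho>} \<in> sets Cube" for i \<rho> using section_sets[OF Xs] secX by metis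
  have rp: "reveal_prob f q i = (\<integral>\<rho>. measure Cube {\<omega>. i \<in> alg_W f q \<omega> \<rho>} \<partial>Cube)" for i
    using measure_section_integral(3)[OF Xs[of i]] by (simp add: reveal_prob_def X_def secX)
  have rint: "integrable Cube (\<lambda>\<rho>. measure Cube {\<omega>. i \<in> alg_W f q \<omega> \<rho>})" for i
    using measure_section_integral(2)[OF Xs[of i]] by (simp add: secX)
  have trm: "AE \<rho> in Cube. AE \<omega> in Cube. \<exists>k. witness f (queried q \<rho> \<omega> k) \<omega>"
    using AE_swap_pair[of "\<lambda>p. \<exists>k. witness f (queried q (snd p) (fst p) k) (fst p)"] va
    unfolding valid_alg_def by simp
  define A where "A = (\<Sum>S\<in>\<S>. fhat f S ^ 2)"
  have cS: "finite S" "card S = k" if "S \<in> \<S>" for S using card[OF that] by auto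
  have pt: "A ^ 2 \<le> (\<Sum>S\<in>\<S>. fhat f S ^ 2 * (\<Sum>i\<in>S. measure Cube {\<omega>. i \<in> alg_W f q \<omega> \<rho>}))"
    if t: "AE \<omega> in Cube. \<exists>k. witness f (queried q \<rho> \<omega> k) \<omega>" for \<rho>
  proof -
    have "A ^ 2 \<le> (\<Sum>S\<in>\<S>. fhat f S ^ 2 * measure Cube {\<omega>. S \<inter> alg_W f q \<omega> \<rho> \<noteq> {}})"
      unfolding A_def
    proof (rule SS_abstract[OF fin card k Jm fm fb])
      show "AE \<omega> in Cube. i \<notin> alg_W f q \<omega> \<rho> \<longrightarrow> alg_W f q (flp i \<omega>) \<rho> = alg_W f q \<omega> \<rho> \<and> f (flp i \<omega>) = f \<omega>" for i
        by (rule alg_inv[OF fm t])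
    qed (simp_all add: fhat_def)
    also have "\<dots> \<le> (\<Sum>S\<in>\<S>. fhat f S ^ 2 * (\<Sum>i\<in>S. measure Cube {\<omega>. i \<in> alg_W f q \<omega> \<rho>}))"
    proof (intro sum_mono mult_left_mono)
      fix S assume S: "S \<in> \<S>"
      have "{\<omega>. S \<inter> alg_W f q \<omega> \<rho> \<noteq> {}} = (\<Union>i\<in>S. {\<omega>. i \<in> alg_W f q \<omega> \<rho>})" by auto
      moreover have "measure Cube (\<Union>i\<in>S. {\<omega>. i \<in> alg_W f q \<omega> \<rho>}) \<le> (\<Sum>i\<in>S. measure Cube {\<omega>. i \<in> alg_W f q \<omega> \<rho>})"
        by (rule C.finite_measure_subadditive_finite) (use cS[OF S] Jm in auto)
      ultimately show "measure Cube {\<omega>. S \<inter> alg_W f q \<omega> \<rho> \<noteq> {}} \<le> (\<Sum>i\<in>S. measure Cube {\<omega>. i \<in> alg_W f q \<omega> \<rho>})"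
        by simp
    qed simp
    finally show ?thesis .
  qed
  have "A ^ 2 = (\<integral>\<rho>. A ^ 2 \<partial>Cube)" using C.prob_space by simp
  also have "\<dots> \<le> (\<integral>\<rho>. (\<Sum>S\<in>\<S>. fhat f S ^ 2 * (\<Sum>i\<in>S. measure Cube {\<omega>. i \<in> alg_W f q \<omega> \<rho>})) \<partial>Cube)"
  proof (rule integral_mono_AE)
    show "integrable Cube (\<lambda>\<rho>. A ^ 2)" by simp
    show "integrable Cube (\<lambda>\<rho>. \<Sum>S\<in>\<S>. fhat f S ^ 2 * (\<Sum>i\<in>S. measure Cube {\<omega>. i \<in> alg_W f q \<omega> \<rho>}))"
      using rint by (intro Bochner_Integration.integrable_sum integrable_mult_right) auto
    show "AE \<rho> in Cube. A ^ 2 \<le> (\<Sum>S\<in>\<S>. fhat f S ^ 2 * (\<Sum>i\<in>S. measure Cube {\<omega>. i \<in> alg_W f q \<omega> \<rho>}))"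
      using trm by eventually_elim (rule pt)
  qed
  also have "\<dots> = (\<Sum>S\<in>\<S>. fhat f S ^ 2 * (\<Sum>i\<in>S. reveal_prob f q i))"
    using rint by (simp add: rp Bochner_Integration.integral_sum integrable_mult_right)
  also have "\<dots> \<le> (\<Sum>S\<in>\<S>. fhat f S ^ 2 * (real k * \<delta>))"
  proof (intro sum_mono mult_left_mono)
    fix S assume S: "S \<in> \<S>"
    have "(\<Sum>i\<in>S. reveal_prob f q i) \<le> (\<Sum>i\<in>S. \<delta>)" unfolding \<delta>_def by (intro sum_mono reveal_le_SUP)
    then show "(\<Sum>i\<in>S. reveal_prob f q i) \<le> real k * \<delta>" using cS[OF S] by simp
  qed simp
  also have "\<dots> = A * (real k * \<delta>)" by (simp add: A_def sum_distrib_right)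
  finally have le: "A ^ 2 \<le> A * (real k * \<delta>)" .
  have A0: "A \<ge> 0" unfolding A_def by (intro sum_nonneg) simp
  have d0: "\<delta> \<ge> 0" unfolding \<delta>_def using reveal_le_SUP[of f q 0] reveal_prob_ge0[of f q 0] by linarith
  show ?thesis
  proof (cases "A = 0")
    case True then show ?thesis using d0 by (simp add: A_def \<delta>_def)
  next
    case False
    then have "A > 0" using A0 by simp
    then show ?thesis using le by (simp add: A_def \<delta>_def power2_eq_square)
  qed
qed

lemma UNIV_Cube[simp]: "UNIV \<in> sets Cube" by (metis sets.top space_Cube)

definition q0 :: "(nat \<Rightarrow> real) \<Rightarrow> (nat \<times> real) list \<Rightarrow> nat" where
  "q0 \<rho> h = length h"

lemma hist_q0: "hist q0 \<rho> \<omega> k = map (\<lambda>j. (j, \<omega> j)) [0..<k]"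
  by (induction k) (auto simp: q0_def)

lemma queried_q0: "queried q0 \<rho> \<omega> k = {..<k}"
  by (auto simp: queried_def hist_q0 image_iff)

lemma sets_witness:
  assumes fm: "f \<in> borel_measurable Cube" and W: "finite W"
  shows "{\<omega>. witness f W \<omega>} \<in> sets Cube"
proof -
  define P where "P = Pi\<^sub>E W (\<lambda>_. {-1, 1::real})"
  have Pfin: "finite P" unfolding P_def using W by (intro finite_PiE) auto
  define C where "C x = {c. AE \<omega>' in Cube. \<omega>' \<in> cyl W x \<longrightarrow> f \<omega>' = c}" for x
  have Cs: "f -` C x \<in> sets Cube" if "x \<in> P" for x
  proof (cases "C x = {}")
    case False
    then obtain c where c: "c \<in> C x" by auto
    have pm: "\<forall>i\<in>W. x i \<in> {-1, 1}" using that by (auto simp: P_def)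
    have "c' = c" if "c' \<in> C x" for c'
      using wit_unique[OF W pm, of f c' c] that c unfolding C_def by simp
    then have "C x = {c}" using c by blast
    moreover have "f -` {c} \<inter> space Cube \<in> sets Cube" using fm by (rule measurable_sets) simp
    ultimately show ?thesis by simp
  qed simp
  define N where "N = {\<omega>::nat\<Rightarrow>real. \<not> (\<forall>j\<in>W. \<omega> j \<in> {-1, 1})}"
  have Ns: "N \<in> sets Cube"
  proof -
    have "N = (\<Union>j\<in>W. UNIV - {\<omega>. \<omega> j \<in> {-1, 1}})" unfolding N_def by blast
    moreover have "(\<Union>j\<in>W. UNIV - {\<omega>::nat\<Rightarrow>real. \<omega> j \<in> {-1, 1}}) \<in> sets Cube"
      using W by (intro sets.finite_UN Cube_compl sets_coord)
    ultimately show ?thesis by simp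
  qed
  have eq: "{\<omega>. witness f W \<omega>} = N \<union> (\<Union>x\<in>P. cyl W x \<inter> f -` C x)"
  proof (intro set_eqI iffI)
    fix \<omega> assume w: "\<omega> \<in> {\<omega>. witness f W \<omega>}"
    show "\<omega> \<in> N \<union> (\<Union>x\<in>P. cyl W x \<inter> f -` C x)"
    proof (cases "\<omega> \<in> N")
      case False
      then have pm: "\<forall>j\<in>W. \<omega> j \<in> {-1, 1}" by (simp add: N_def)
      define x where "x = restrict \<omega> W"
      have "x \<in> P" using pm by (auto simp: x_def P_def)
      moreover have "\<omega> \<in> cyl W x" by (simp add: x_def cyl_def)
      moreover have "f \<omega> \<in> C x" using w witness_iff[OF fm W pm] by (simp add: C_def x_def cyl_restrict)
      ultimately show ?thesis by blast
    qed simp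
  next
    fix \<omega> assume "\<omega> \<in> N \<union> (\<Union>x\<in>P. cyl W x \<inter> f -` C x)"
    then show "\<omega> \<in> {\<omega>. witness f W \<omega>}"
    proof
      assume "\<omega> \<in> N" then show ?thesis using witness_nonpm[OF W] by (simp add: N_def)
    next
      assume "\<omega> \<in> (\<Union>x\<in>P. cyl W x \<inter> f -` C x)"
      then obtain x where x: "x \<in> P" "\<omega> \<in> cyl W x" "f \<omega> \<in> C x" by auto
      have pm: "\<forall>j\<in>W. \<omega> j \<in> {-1, 1}" using x by (auto simp: P_def cyl_def)
      have "cyl W x = cyl W \<omega>" using x(2) by (auto simp: cyl_def)
      then show ?thesis using x(3) witness_iff[OF fm W pm] by (simp add: C_def)
    qed
  qed
  have "(\<Union>x\<in>P. cyl W x \<inter> f -` C x) \<in> sets Cube"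
  proof (rule sets.finite_UN[OF Pfin])
    fix x assume "x \<in> P"
    then show "cyl W x \<inter> f -` C x \<in> sets Cube" using Cs sets_cyl[OF W] by (intro sets.Int) auto
  qed
  then show ?thesis unfolding eq using Ns by (rule sets.Un[rotated])
qed

lemma sets_stop_q0:
  assumes fm: "f \<in> borel_measurable Cube"
  shows "{\<omega>. i < stop_time f q0 \<omega> \<rho>} \<in> sets Cube"
proof -
  define w where "w k \<omega> = witness f {..<k} \<omega>" for k \<omega>
  have ws: "{\<omega>. w k \<omega>} \<in> sets Cube" for k unfolding w_def by (rule sets_witness[OF fm]) simp
  have st: "stop_time f q0 \<omega> \<rho> = (LEAST k. w k \<omega>)" for \<omega> by (simp add: stop_time_def queried_q0 w_def)
  define L where "L = (LEAST k::nat. False)"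
  have eq: "{\<omega>. i < stop_time f q0 \<omega> \<rho>} =
     ((\<Union>k. {\<omega>. w k \<omega>}) \<inter> (\<Inter>k\<in>{..i}. UNIV - {\<omega>. w k \<omega>})) \<union> ((UNIV - (\<Union>k. {\<omega>. w k \<omega>})) \<inter> (if i < L then UNIV else {}))"
  proof (intro set_eqI)
    fix \<omega>
    show "\<omega> \<in> {\<omega>. i < stop_time f q0 \<omega> \<rho>} \<longleftrightarrow> \<omega> \<in> ((\<Union>k. {\<omega>. w k \<omega>}) \<inter> (\<Inter>k\<in>{..i}. UNIV - {\<omega>. w k \<omega>})) \<union> ((UNIV - (\<Union>k. {\<omega>. w k \<omega>})) \<inter> (if i < L then UNIV else {}))"
    proof (cases "\<exists>k. w k \<omega>")
      case True
      have "i < (LEAST k. w k \<omega>) \<longleftrightarrow> (\<forall>k\<le>i. \<not> w k \<omega>)"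
      proof
        assume "i < (LEAST k. w k \<omega>)"
        then show "\<forall>k\<le>i. \<not> w k \<omega>" using Least_le[of "\<lambda>k. w k \<omega>"] by (meson le_trans not_le)
      next
        assume a: "\<forall>k\<le>i. \<not> w k \<omega>"
        have "w (LEAST k. w k \<omega>) \<omega>" using True by (rule LeastI_ex)
        then show "i < (LEAST k. w k \<omega>)" using a by (meson not_le)
      qed
      then show ?thesis using True by (simp add: st) (simp add: Ball_def)
    next
      case False
      then have "(\<lambda>k. w k \<omega>) = (\<lambda>k. False)" by auto
      then have "stop_time f q0 \<omega> \<rho> = L" by (simp add: st L_def)
      then show ?thesis using False by simp
    qed
  qed
  have u: "(\<Union>k. {\<omega>. w k \<omega>}) \<in> sets Cube" using ws by (intro sets.countable_UN) auto
  have v: "(\<Inter>k\<in>{..i}. UNIV - {\<omega>. w k \<omega>}) \<in> sets Cube" using ws by (intro sets.finite_INT Cube_compl) auto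
  have x: "(if i < L then UNIV else {}) \<in> sets Cube" by simp
  show ?thesis unfolding eq using u v x by (intro sets.Un sets.Int Cube_compl)
qed

lemma valid_q0:
  assumes bf: "boolean_fun f" and fin: "finitary f"
  shows "valid_alg f q0"
  unfolding valid_alg_def
proof (intro conjI allI)
  note fm = boolean_fun_bounds(1)[OF bf]
  show "(\<lambda>\<rho>. q0 \<rho> h) \<in> Cube \<rightarrow>\<^sub>M count_space UNIV" for h by (simp add: q0_def)
  have "AE \<omega> in Cube. \<exists>k. witness f (queried q0 \<rho> \<omega> k) \<omega>" for \<rho>
    using fin unfolding finitary_def
  proof eventually_elim
    case (elim \<omega>)
    then obtain W where W: "finite W" "witness f W \<omega>" by auto
    obtain k where "W \<subseteq> {..<k}" using W(1) finite_nat_bounded by blast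
    then have "witness f {..<k} \<omega>" using W(2) witness_mono by blast
    then show ?case by (auto simp: queried_q0)
  qed
  then have ae: "AE \<omega> in Cube. \<exists>k. witness f {..<k} \<omega>" by (simp add: queried_q0)
  have "AE p in distr (Cube \<Otimes>\<^sub>M Cube) Cube fst. \<exists>k. witness f {..<k} p"
    unfolding C.distr_pair_fst by (rule ae)
  then have "AE p in Cube \<Otimes>\<^sub>M Cube. \<exists>k. witness f {..<k} (fst p)"
    by (rule AE_distrD[rotated]) simp
  then show "AE p in Cube \<Otimes>\<^sub>M Cube. \<exists>k. witness f (queried q0 (snd p) (fst p) k) (fst p)"
    by (simp add: queried_q0)
  fix i
  have st: "stop_time f q0 \<omega> \<rho> = stop_time f q0 \<omega> \<rho>'" for \<omega> \<rho> \<rho>'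
    by (simp add: stop_time_def queried_q0)
  have "{p \<in> space (Cube \<Otimes>\<^sub>M Cube). i \<in> alg_W f q0 (fst p) (snd p)} = fst -` {\<omega>. i < stop_time f q0 \<omega> undefined} \<inter> space (Cube \<Otimes>\<^sub>M Cube)"
  proof (intro set_eqI)
    fix p :: "(nat \<Rightarrow> real) \<times> (nat \<Rightarrow> real)"
    show "p \<in> {p \<in> space (Cube \<Otimes>\<^sub>M Cube). i \<in> alg_W f q0 (fst p) (snd p)} \<longleftrightarrow> p \<in> fst -` {\<omega>. i < stop_time f q0 \<omega> undefined} \<inter> space (Cube \<Otimes>\<^sub>M Cube)"
      using st[of "fst p" "snd p" undefined] by (simp add: alg_W_def queried_q0)
  qed
  also have "\<dots> \<in> sets (Cube \<Otimes>\<^sub>M Cube)"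
    by (rule measurable_sets[OF measurable_fst sets_stop_q0[OF fm]])
  finally show "{p \<in> space (Cube \<Otimes>\<^sub>M Cube). i \<in> alg_W f q0 (fst p) (snd p)} \<in> sets (Cube \<Otimes>\<^sub>M Cube)" .
qed

lemma revealment_bound:
  assumes bf: "boolean_fun f" and fin: "finitary f"
    and fS: "finite \<S>" and card: "\<And>S. S \<in> \<S> \<Longrightarrow> finite S \<and> card S = k" and k: "k > 0"
  shows "(\<Sum>S\<in>\<S>. fhat f S ^ 2) \<le> real k * revealment f"
proof -
  have "(\<Sum>S\<in>\<S>. fhat f S ^ 2) / real k \<le> revealment f"
    unfolding revealment_def
  proof (rule cINF_greatest)
    show "{q. valid_alg f q} \<noteq> {}" using valid_q0[OF bf fin] by auto
    fix q assume "q \<in> {q. valid_alg f q}"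
    then have "(\<Sum>S\<in>\<S>. fhat f S ^ 2) \<le> real k * (SUP i. reveal_prob f q i)"
      using SS_alg[OF bf _ fS card k] by simp
    then show "(\<Sum>S\<in>\<S>. fhat f S ^ 2) / real k \<le> (SUP i. reveal_prob f q i)"
      using k by (simp add: field_simps)
  qed
  then show ?thesis using k by (simp add: field_simps)
qed

definition U :: "real pmf" where "U = pmf_of_set {-1, 1}"

lemma noise_pmf_U: "noise_pmf \<epsilon> = do { x \<leftarrow> U; r \<leftarrow> bernoulli_pmf \<epsilon>; z \<leftarrow> U; return_pmf (x, if r then z else x) }"
  by (simp add: noise_pmf_def U_def)

lemma map_fst_noise: "map_pmf fst (noise_pmf \<epsilon>) = U"
  unfolding noise_pmf_U by (simp add: map_bind_pmf bind_return_pmf' del: bind_pmf_const)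
    (simp add: bind_return_pmf')

lemma map_snd_noise: "map_pmf snd (noise_pmf \<epsilon>) = U"
proof -
  have "map_pmf snd (noise_pmf \<epsilon>) = do { x \<leftarrow> U; r \<leftarrow> bernoulli_pmf \<epsilon>; z \<leftarrow> U; return_pmf (if r then z else x) }"
    unfolding noise_pmf_U by (simp add: map_bind_pmf)
  also have "\<dots> = do { r \<leftarrow> bernoulli_pmf \<epsilon>; x \<leftarrow> U; z \<leftarrow> U; return_pmf (if r then z else x) }"
    by (rule bind_commute_pmf)
  also have "\<dots> = do { r \<leftarrow> bernoulli_pmf \<epsilon>; U }"
  proof (intro bind_pmf_cong refl)
    fix r :: bool
    show "do { x \<leftarrow> U; z \<leftarrow> U; return_pmf (if r then z else x) } = U"
      by (cases r) (simp_all add: bind_return_pmf')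
  qed
  also have "\<dots> = U" by simp
  finally show ?thesis .
qed

lemma pmf_noise:
  assumes e: "0 \<le> \<epsilon>" "\<epsilon> \<le> 1" and ab: "a \<in> {-1, 1}" "b \<in> {-1, 1}"
  shows "pmf (noise_pmf \<epsilon>) (a, b) = (1 + (1 - \<epsilon>) * a * b) / 4"
  using ab unfolding noise_pmf_def
  by (auto simp: pmf_bind integral_pmf_of_set e indicator_def field_simps)

lemma space_NoiseCube[simp]: "space (NoiseCube \<epsilon>) = UNIV"
  by (simp add: NoiseCube_def space_PiM)

lemma prob_space_NoiseCube: "prob_space (NoiseCube \<epsilon>)"
  unfolding NoiseCube_def by (rule prob_space_PiM) (simp add: prob_space_measure_pmf)

lemma distr_pmf_coin: assumes "map_pmf g p = U" shows "distr (measure_pmf p) coin g = coin"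
proof -
  have "distr (measure_pmf p) coin g = distr (measure_pmf p) (count_space UNIV) g"
    by (rule distr_cong) (simp_all add: coin_def)
  also have "\<dots> = measure_pmf (map_pmf g p)" by (simp add: map_pmf_rep_eq)
  also have "\<dots> = coin" using assms by (simp add: coin_def U_def)
  finally show ?thesis .
qed

lemma meas_fst_coord: "(\<lambda>p i. fst (p i)) \<in> NoiseCube \<epsilon> \<rightarrow>\<^sub>M Cube"
  unfolding NoiseCube_def Cube_def
proof (rule measurable_PiM_single')
  fix i :: nat
  have "(\<lambda>p. p i) \<in> PiM UNIV (\<lambda>_. measure_pmf (noise_pmf \<epsilon>)) \<rightarrow>\<^sub>M measure_pmf (noise_pmf \<epsilon>)" by simp
  moreover have "fst \<in> measure_pmf (noise_pmf \<epsilon>) \<rightarrow>\<^sub>M coin" by (simp add: measurable_def)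
  ultimately show "(\<lambda>p. fst (p i)) \<in> PiM UNIV (\<lambda>_. measure_pmf (noise_pmf \<epsilon>)) \<rightarrow>\<^sub>M coin"
    by (rule measurable_compose)
qed (simp add: space_PiM)

lemma meas_snd_coord: "(\<lambda>p i. snd (p i)) \<in> NoiseCube \<epsilon> \<rightarrow>\<^sub>M Cube"
  unfolding NoiseCube_def Cube_def
proof (rule measurable_PiM_single')
  fix i :: nat
  have "(\<lambda>p. p i) \<in> PiM UNIV (\<lambda>_. measure_pmf (noise_pmf \<epsilon>)) \<rightarrow>\<^sub>M measure_pmf (noise_pmf \<epsilon>)" by simp
  moreover have "snd \<in> measure_pmf (noise_pmf \<epsilon>) \<rightarrow>\<^sub>M coin" by (simp add: measurable_def)
  ultimately show "(\<lambda>p. snd (p i)) \<in> PiM UNIV (\<lambda>_. measure_pmf (noise_pmf \<epsilon>)) \<rightarrow>\<^sub>M coin"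
    by (rule measurable_compose)
qed (simp add: space_PiM)

lemma distr_fst_coord: "distr (NoiseCube \<epsilon>) Cube (\<lambda>p i. fst (p i)) = Cube"
proof -
  have "distr (NoiseCube \<epsilon>) Cube (\<lambda>x. \<lambda>i\<in>UNIV. fst (x i)) = Cube"
    unfolding NoiseCube_def Cube_def
    by (rule distr_PiM_coord) (auto simp: prob_space_measure_pmf measurable_def distr_pmf_coin map_fst_noise)
  moreover have "distr (NoiseCube \<epsilon>) Cube (\<lambda>p i. fst (p i)) = distr (NoiseCube \<epsilon>) Cube (\<lambda>x. \<lambda>i\<in>UNIV. fst (x i))"
    by (rule distr_cong) auto
  ultimately show ?thesis by simp
qed

lemma distr_snd_coord: "distr (NoiseCube \<epsilon>) Cube (\<lambda>p i. snd (p i)) = Cube"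
proof -
  have "distr (NoiseCube \<epsilon>) Cube (\<lambda>x. \<lambda>i\<in>UNIV. snd (x i)) = Cube"
    unfolding NoiseCube_def Cube_def
    by (rule distr_PiM_coord) (auto simp: prob_space_measure_pmf measurable_def distr_pmf_coin map_snd_noise)
  moreover have "distr (NoiseCube \<epsilon>) Cube (\<lambda>p i. snd (p i)) = distr (NoiseCube \<epsilon>) Cube (\<lambda>x. \<lambda>i\<in>UNIV. snd (x i))"
    by (rule distr_cong) auto
  ultimately show ?thesis by simp
qed

lemma AE_fst_coord: "AE \<omega> in Cube. P \<omega> \<Longrightarrow> AE p in NoiseCube \<epsilon>. P (\<lambda>i. fst (p i))"
proof -
  assume "AE \<omega> in Cube. P \<omega>"
  then have "AE \<omega> in distr (NoiseCube \<epsilon>) Cube (\<lambda>p i. fst (p i)). P \<omega>" unfolding distr_fst_coord .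
  then show ?thesis by (rule AE_distrD[OF meas_fst_coord])
qed

lemma AE_snd_coord: "AE \<omega> in Cube. P \<omega> \<Longrightarrow> AE p in NoiseCube \<epsilon>. P (\<lambda>i. snd (p i))"
proof -
  assume "AE \<omega> in Cube. P \<omega>"
  then have "AE \<omega> in distr (NoiseCube \<epsilon>) Cube (\<lambda>p i. snd (p i)). P \<omega>" unfolding distr_snd_coord .
  then show ?thesis by (rule AE_distrD[OF meas_snd_coord])
qed

definition cyl2 :: "nat set \<Rightarrow> (nat \<Rightarrow> real \<times> real) \<Rightarrow> (nat \<Rightarrow> real \<times> real) set" where
  "cyl2 I z = {p. \<forall>i\<in>I. p i = z i}"

lemma cyl2_emb: "cyl2 I z = prod_emb UNIV (\<lambda>_. measure_pmf (noise_pmf \<epsilon>)) I (Pi\<^sub>E I (\<lambda>i. {z i}))"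
  by (auto simp: cyl2_def prod_emb_def PiE_iff)

lemma sets_cyl2: "finite I \<Longrightarrow> cyl2 I z \<in> sets (NoiseCube \<epsilon>)"
  unfolding cyl2_emb[of _ _ \<epsilon>] NoiseCube_def by (rule sets_PiM_I) auto

lemma measure_cyl2: assumes "finite I"
  shows "measure (NoiseCube \<epsilon>) (cyl2 I z) = (\<Prod>i\<in>I. pmf (noise_pmf \<epsilon>) (z i))"
proof -
  interpret N: prob_space "NoiseCube \<epsilon>" by (rule prob_space_NoiseCube)
  have "emeasure (NoiseCube \<epsilon>) (cyl2 I z) = (\<Prod>i\<in>I. emeasure (measure_pmf (noise_pmf \<epsilon>)) {z i})"
    unfolding cyl2_emb[of _ _ \<epsilon>] NoiseCube_def using assms
    by (intro emeasure_PiM_emb) (auto simp: prob_space_measure_pmf)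
  also have "\<dots> = (\<Prod>i\<in>I. ennreal (pmf (noise_pmf \<epsilon>) (z i)))"
    by (simp add: emeasure_pmf_single)
  also have "\<dots> = ennreal (\<Prod>i\<in>I. pmf (noise_pmf \<epsilon>) (z i))" by (rule prod_ennreal) simp
  finally show ?thesis by (simp add: N.emeasure_eq_measure prod_nonneg)
qed

definition pats :: "nat \<Rightarrow> (nat \<Rightarrow> real) set" where
  "pats N = Pi\<^sub>E {..<N} (\<lambda>_. {-1, 1})"

definition cf :: "((nat \<Rightarrow> real) \<Rightarrow> real) \<Rightarrow> nat \<Rightarrow> (nat \<Rightarrow> real) \<Rightarrow> real" where
  "cf f N x = 2 ^ N * (\<integral>\<omega>. f \<omega> * indicator (cyl {..<N} x) \<omega> \<partial>Cube)"

definition fN :: "((nat \<Rightarrow> real) \<Rightarrow> real) \<Rightarrow> nat \<Rightarrow> (nat \<Rightarrow> real) \<Rightarrow> real" where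
  "fN f N \<omega> = (\<Sum>x\<in>pats N. cf f N x * indicator (cyl {..<N} x) \<omega>)"

lemma finite_pats[simp]: "finite (pats N)" unfolding pats_def by (intro finite_PiE) auto

lemma pats_pm: "x \<in> pats N \<Longrightarrow> \<forall>i\<in>{..<N}. x i \<in> {-1, 1}" by (auto simp: pats_def)

lemma mem_cyl_pats: assumes "x \<in> pats N"
  shows "\<omega> \<in> cyl {..<N} x \<longleftrightarrow> x = restrict \<omega> {..<N}"
proof
  have ex: "x \<in> extensional {..<N}" using assms by (simp add: pats_def PiE_iff)
  assume "\<omega> \<in> cyl {..<N} x"
  then have a: "\<forall>i<N. \<omega> i = x i" by (simp add: cyl_def)
  show "x = restrict \<omega> {..<N}"
  proof
    fix i show "x i = restrict \<omega> {..<N} i"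
      using a ex by (cases "i < N") (simp_all add: extensional_def)
  qed
next
  assume "x = restrict \<omega> {..<N}"
  then show "\<omega> \<in> cyl {..<N} x" by (simp add: cyl_def)
qed

lemma restrict_pats: "(\<forall>i<N. \<omega> i \<in> {-1, 1}) \<Longrightarrow> restrict \<omega> {..<N} \<in> pats N"
  by (simp add: pats_def restrict_PiE_iff)

lemma sum_cyl:
  "(\<Sum>x\<in>pats N. g x * indicator (cyl {..<N} x) \<omega>) = (if (\<forall>i<N. \<omega> i \<in> {-1, 1}) then g (restrict \<omega> {..<N}) else (0::real))"
proof (cases "\<forall>i<N. \<omega> i \<in> {-1, 1}")
  case True
  have "(\<Sum>x\<in>pats N. g x * indicator (cyl {..<N} x) \<omega>) = (\<Sum>x\<in>pats N. if x = restrict \<omega> {..<N} then g x else 0)"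
  proof (intro sum.cong refl)
    fix x assume "x \<in> pats N"
    then show "g x * indicator (cyl {..<N} x) \<omega> = (if x = restrict \<omega> {..<N} then g x else 0)"
      using mem_cyl_pats[of x N \<omega>] by (simp add: indicator_def)
  qed
  also have "\<dots> = g (restrict \<omega> {..<N})" using restrict_pats[OF True] by (simp add: sum.delta')
  finally show ?thesis using True by simp
next
  case False
  have "\<omega> \<notin> cyl {..<N} x" if x: "x \<in> pats N" for x
  proof
    assume "\<omega> \<in> cyl {..<N} x"
    then have "\<forall>i<N. \<omega> i = x i" by (simp add: cyl_def)
    then have "\<forall>i<N. \<omega> i \<in> {-1, 1}" using pats_pm[OF x] by simp
    then show False using False by blast
  qed
  then have "(\<Sum>x\<in>pats N. g x * indicator (cyl {..<N} x) \<omega>) = 0" by simp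
  then show ?thesis using False by (simp only: if_False)
qed

lemma measure_cyl_pats: assumes x: "x \<in> pats N" shows "measure Cube (cyl {..<N} x) = (1/2) ^ N"
proof -
  have "\<forall>i\<in>{..<N}. x i \<in> {-1, 1}" by (rule pats_pm[OF x])
  then show ?thesis by (subst measure_cyl) simp_all
qed

lemma abs_cf: assumes fm: "f \<in> borel_measurable Cube" and fb: "\<And>\<omega>. \<bar>f \<omega>\<bar> \<le> 1" and x: "x \<in> pats N"
  shows "\<bar>cf f N x\<bar> \<le> 1"
proof -
  have "\<bar>\<integral>\<omega>. f \<omega> * indicator (cyl {..<N} x) \<omega> \<partial>Cube\<bar> \<le> (\<integral>\<omega>. indicator (cyl {..<N} x) \<omega> \<partial>Cube)"
  proof (rule order_trans[OF integral_abs_bound integral_mono])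
    show "integrable Cube (\<lambda>\<omega>. \<bar>f \<omega> * indicator (cyl {..<N} x) \<omega>\<bar>)"
      by (rule intb[where B=1]) (use fm fb in \<open>auto simp: indicator_def\<close>)
    show "integrable Cube (\<lambda>\<omega>. indicator (cyl {..<N} x) \<omega> :: real)"
      by (rule intb[where B=1]) (auto simp: indicator_def)
    show "\<bar>f \<omega> * indicator (cyl {..<N} x) \<omega>\<bar> \<le> indicator (cyl {..<N} x) \<omega>" for \<omega>
      using fb[of \<omega>] by (auto simp: indicator_def)
  qed
  also have "\<dots> = (1/2) ^ N" using measure_cyl_pats[OF x] by simp
  finally show ?thesis unfolding cf_def by (simp add: abs_mult power_one_over field_simps)
qed

lemma fN_measurable[measurable]: "fN f N \<in> borel_measurable Cube"
  unfolding fN_def by (intro borel_measurable_sum borel_measurable_times) auto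

lemma abs_fN: assumes fm: "f \<in> borel_measurable Cube" and fb: "\<And>\<omega>. \<bar>f \<omega>\<bar> \<le> 1"
  shows "\<bar>fN f N \<omega>\<bar> \<le> 1"
  unfolding fN_def sum_cyl using abs_cf[OF fm fb restrict_pats] by auto

lemma fN_eventually:
  assumes fm: "f \<in> borel_measurable Cube" and fin: "finitary f"
  shows "AE \<omega> in Cube. eventually (\<lambda>N. fN f N \<omega> = f \<omega>) sequentially"
  using fin[unfolded finitary_def] AE_pm
proof eventually_elim
  case (elim \<omega>)
  then obtain W where W: "finite W" "witness f W \<omega>" by auto
  obtain N0 where N0: "W \<subseteq> {..<N0}" using W(1) finite_nat_bounded by blast
  have pm: "\<forall>i\<in>W. \<omega> i \<in> {-1, 1}" using elim(2) by auto
  have ae: "AE \<omega>' in Cube. \<omega>' \<in> cyl W \<omega> \<longrightarrow> f \<omega>' = f \<omega>" using W(2) witness_iff[OF fm W(1) pm] by simp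
  show ?case unfolding eventually_sequentially
  proof (intro exI allI impI)
    fix N assume N: "N0 \<le> N"
    define x where "x = restrict \<omega> {..<N}"
    have pmN: "\<forall>i<N. \<omega> i \<in> {-1, 1}" using elim(2) by auto
    have xp: "x \<in> pats N" unfolding x_def by (rule restrict_pats[OF pmN])
    have sub: "cyl {..<N} x \<subseteq> cyl W \<omega>" using N0 N by (auto simp: cyl_def x_def)
    have "(\<integral>\<omega>'. f \<omega>' * indicator (cyl {..<N} x) \<omega>' \<partial>Cube) = (\<integral>\<omega>'. f \<omega> * indicator (cyl {..<N} x) \<omega>' \<partial>Cube)"
    proof (rule integral_cong_AE)
      show "AE \<omega>' in Cube. f \<omega>' * indicator (cyl {..<N} x) \<omega>' = f \<omega> * indicator (cyl {..<N} x) \<omega>'"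
        using ae by eventually_elim (use sub in \<open>auto simp: indicator_def\<close>)
    qed (use fm in auto)
    also have "\<dots> = f \<omega> * (1/2) ^ N" using measure_cyl_pats[OF xp] by simp
    finally have "cf f N x = f \<omega>" unfolding cf_def by (simp add: power_one_over)
    then show "fN f N \<omega> = f \<omega>" unfolding fN_def sum_cyl using pmN by (simp add: x_def)
  qed
qed

lemma chi_restrict: "S \<subseteq> {..<N} \<Longrightarrow> chi S (restrict \<omega> {..<N}) = chi S \<omega>"
  unfolding chi_def by (intro prod.cong refl) auto

lemma sgn_pm: "a \<in> {-1, 1} \<Longrightarrow> sgn a = (a::real)" by auto

lemma chi_pats: assumes x: "x \<in> pats N" and S: "S \<subseteq> {..<N}" shows "chi S x = (\<Prod>i\<in>S. x i)"
  unfolding chi_def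
proof (intro prod.cong refl)
  fix i assume "i \<in> S"
  then have "x i \<in> {-1, 1}" using pats_pm[OF x] S by auto
  then show "sgn (x i) = x i" by (rule sgn_pm)
qed

lemma fhat_pats:
  assumes fm: "f \<in> borel_measurable Cube" and fb: "\<And>\<omega>. \<bar>f \<omega>\<bar> \<le> 1" and S: "S \<subseteq> {..<N}"
  shows "fhat f S = (\<Sum>x\<in>pats N. (1/2) ^ N * cf f N x * chi S x)"
proof -
  have "fhat f S = (\<integral>\<omega>. (\<Sum>x\<in>pats N. chi S x * (f \<omega> * indicator (cyl {..<N} x) \<omega>)) \<partial>Cube)"
    unfolding fhat_def
  proof (rule integral_cong_AE)
    show "(\<lambda>\<omega>. f \<omega> * chi S \<omega>) \<in> borel_measurable Cube" using fm by measurable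
    show "(\<lambda>\<omega>. \<Sum>x\<in>pats N. chi S x * (f \<omega> * indicator (cyl {..<N} x) \<omega>)) \<in> borel_measurable Cube"
      using fm by measurable
    show "AE \<omega> in Cube. f \<omega> * chi S \<omega> = (\<Sum>x\<in>pats N. chi S x * (f \<omega> * indicator (cyl {..<N} x) \<omega>))"
      using AE_pm
    proof eventually_elim
      case (elim \<omega>)
      have "(\<Sum>x\<in>pats N. chi S x * (f \<omega> * indicator (cyl {..<N} x) \<omega>))
          = (\<Sum>x\<in>pats N. (chi S x * f \<omega>) * indicator (cyl {..<N} x) \<omega>)"
        by (simp add: mult.assoc)
      also have "\<dots> = chi S (restrict \<omega> {..<N}) * f \<omega>"
        using sum_cyl[of "\<lambda>x. chi S x * f \<omega>" N \<omega>] elim by simp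
      finally show ?case using chi_restrict[OF S] by simp
    qed
  qed
  also have "\<dots> = (\<Sum>x\<in>pats N. chi S x * (\<integral>\<omega>. f \<omega> * indicator (cyl {..<N} x) \<omega> \<partial>Cube))"
  proof (subst Bochner_Integration.integral_sum)
    fix x assume "x \<in> pats N"
    show "integrable Cube (\<lambda>\<omega>. chi S x * (f \<omega> * indicator (cyl {..<N} x) \<omega>))"
      by (intro integrable_mult_right intb[where B=1]) (use fm fb in \<open>auto simp: indicator_def\<close>)
  qed simp
  also have "\<dots> = (\<Sum>x\<in>pats N. (1/2) ^ N * cf f N x * chi S x)"
    by (intro sum.cong refl) (simp add: cf_def power_one_over)
  finally show ?thesis .
qed

lemma fhat_empty: "fhat f {} = (\<integral>\<omega>. f \<omega> \<partial>Cube)"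
  by (simp add: fhat_def chi_def)

lemma ind_prod_cyl2:
  "indicator (cyl {..<N} x) (\<lambda>i. fst (p i)) * indicator (cyl {..<N} y) (\<lambda>i. snd (p i))
     = (indicator (cyl2 {..<N} (\<lambda>i. (x i, y i))) p :: real)"
  by (auto simp: indicator_def cyl_def cyl2_def prod_eq_iff)

lemma noise_fN:
  assumes e: "0 \<le> \<epsilon>" "\<epsilon> \<le> 1"
  shows "(\<integral>p. fN f N (\<lambda>i. fst (p i)) * fN f N (\<lambda>i. snd (p i)) \<partial>NoiseCube \<epsilon>)
     = (\<Sum>x\<in>pats N. \<Sum>y\<in>pats N. cf f N x * cf f N y * (\<Prod>i<N. (1 + (1 - \<epsilon>) * x i * y i) / 4))"
proof -
  interpret Nz: prob_space "NoiseCube \<epsilon>" by (rule prob_space_NoiseCube)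
  have "(\<integral>p. fN f N (\<lambda>i. fst (p i)) * fN f N (\<lambda>i. snd (p i)) \<partial>NoiseCube \<epsilon>)
     = (\<integral>p. (\<Sum>x\<in>pats N. \<Sum>y\<in>pats N. cf f N x * cf f N y * indicator (cyl2 {..<N} (\<lambda>i. (x i, y i))) p) \<partial>NoiseCube \<epsilon>)"
    unfolding fN_def sum_product
    by (intro Bochner_Integration.integral_cong refl sum.cong) (simp add: ind_prod_cyl2[symmetric] algebra_simps)
  also have "\<dots> = (\<Sum>x\<in>pats N. \<Sum>y\<in>pats N. cf f N x * cf f N y * measure (NoiseCube \<epsilon>) (cyl2 {..<N} (\<lambda>i. (x i, y i))))"
  proof -
    have int: "integrable (NoiseCube \<epsilon>) (\<lambda>p. cf f N x * cf f N y * indicator (cyl2 {..<N} (\<lambda>i. (x i, y i))) p)" for x y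
      using sets_cyl2[of "{..<N}" _ \<epsilon>] by (intro integrable_mult_right integrable_real_indicator) (auto simp: less_top[symmetric] Nz.emeasure_finite)
    have "(\<integral>p. (\<Sum>x\<in>pats N. \<Sum>y\<in>pats N. cf f N x * cf f N y * indicator (cyl2 {..<N} (\<lambda>i. (x i, y i))) p) \<partial>NoiseCube \<epsilon>)
        = (\<Sum>x\<in>pats N. \<integral>p. (\<Sum>y\<in>pats N. cf f N x * cf f N y * indicator (cyl2 {..<N} (\<lambda>i. (x i, y i))) p) \<partial>NoiseCube \<epsilon>)"
      by (rule Bochner_Integration.integral_sum) (intro Bochner_Integration.integrable_sum int)
    also have "\<dots> = (\<Sum>x\<in>pats N. \<Sum>y\<in>pats N. \<integral>p. cf f N x * cf f N y * indicator (cyl2 {..<N} (\<lambda>i. (x i, y i))) p \<partial>NoiseCube \<epsilon>)"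
      by (intro sum.cong refl Bochner_Integration.integral_sum int)
    also have "\<dots> = (\<Sum>x\<in>pats N. \<Sum>y\<in>pats N. cf f N x * cf f N y * measure (NoiseCube \<epsilon>) (cyl2 {..<N} (\<lambda>i. (x i, y i))))"
    proof (intro sum.cong refl)
      fix x y
      have "(\<integral>p. indicator (cyl2 {..<N} (\<lambda>i. (x i, y i))) p \<partial>NoiseCube \<epsilon>) = measure (NoiseCube \<epsilon>) (cyl2 {..<N} (\<lambda>i. (x i, y i)))"
        by simp
      then show "(\<integral>p. cf f N x * cf f N y * indicator (cyl2 {..<N} (\<lambda>i. (x i, y i))) p \<partial>NoiseCube \<epsilon>)
          = cf f N x * cf f N y * measure (NoiseCube \<epsilon>) (cyl2 {..<N} (\<lambda>i. (x i, y i)))"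
        by (simp only: integral_mult_right_zero)
    qed
    finally show ?thesis .
  qed
  also have "\<dots> = (\<Sum>x\<in>pats N. \<Sum>y\<in>pats N. cf f N x * cf f N y * (\<Prod>i<N. (1 + (1 - \<epsilon>) * x i * y i) / 4))"
  proof (intro sum.cong refl)
    fix x y assume x: "x \<in> pats N" and y: "y \<in> pats N"
    have "measure (NoiseCube \<epsilon>) (cyl2 {..<N} (\<lambda>i. (x i, y i))) = (\<Prod>i<N. pmf (noise_pmf \<epsilon>) (x i, y i))"
      by (simp add: measure_cyl2)
    also have "\<dots> = (\<Prod>i<N. (1 + (1 - \<epsilon>) * x i * y i) / 4)"
      using pats_pm[OF x] pats_pm[OF y] by (intro prod.cong refl pmf_noise[OF e]) auto
    finally show "cf f N x * cf f N y * measure (NoiseCube \<epsilon>) (cyl2 {..<N} (\<lambda>i. (x i, y i)))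
        = cf f N x * cf f N y * (\<Prod>i<N. (1 + (1 - \<epsilon>) * x i * y i) / 4)" by simp
  qed
  finally show ?thesis .
qed

lemma sum_sum_prod: "(\<Sum>x\<in>A. \<Sum>y\<in>B. k * (a x * b y)) = (k::real) * ((\<Sum>x\<in>A. a x) * (\<Sum>y\<in>B. b y))"
proof -
  have "(\<Sum>x\<in>A. \<Sum>y\<in>B. k * (a x * b y)) = (\<Sum>x\<in>A. k * (a x * (\<Sum>y\<in>B. b y)))"
    by (simp add: sum_distrib_left)
  also have "\<dots> = k * ((\<Sum>x\<in>A. a x) * (\<Sum>y\<in>B. b y))"
    by (simp add: sum_distrib_left sum_distrib_right mult.assoc sum.swap[of _ A])
  finally show ?thesis .
qed

lemma noise_algebra:
  fixes c :: "(nat \<Rightarrow> real) \<Rightarrow> real" and r :: real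
  shows "(\<Sum>x\<in>pats N. \<Sum>y\<in>pats N. c x * c y * (\<Prod>i<N. (1 + r * x i * y i) / 4))
     = (\<Sum>S\<in>Pow {..<N}. r ^ card S * (\<Sum>x\<in>pats N. (1/2) ^ N * c x * chi S x) ^ 2)"
proof -
  have prod: "(\<Prod>i<N. (1 + r * x i * y i) / 4) = (1/4) ^ N * (\<Sum>S\<in>Pow {..<N}. r ^ card S * (chi S x * chi S y))"
    if x: "x \<in> pats N" and y: "y \<in> pats N" for x y
  proof -
    have "(\<Prod>i<N. (1 + r * x i * y i) / 4) = (1/4) ^ N * (\<Prod>i<N. r * x i * y i + 1)"
      by (simp add: prod_dividef power_one_over algebra_simps)
    also have "(\<Prod>i<N. r * x i * y i + 1) = (\<Sum>S\<in>Pow {..<N}. (\<Prod>i\<in>S. r * x i * y i) * (\<Prod>i\<in>{..<N}-S. 1))"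
      by (rule prod_add) simp
    also have "\<dots> = (\<Sum>S\<in>Pow {..<N}. r ^ card S * (chi S x * chi S y))"
    proof (intro sum.cong refl)
      fix S assume "S \<in> Pow {..<N}"
      then have S: "S \<subseteq> {..<N}" by simp
      have "(\<Prod>i\<in>S. r * x i * y i) = r ^ card S * ((\<Prod>i\<in>S. x i) * (\<Prod>i\<in>S. y i))"
        by (simp add: prod.distrib)
      then show "(\<Prod>i\<in>S. r * x i * y i) * (\<Prod>i\<in>{..<N}-S. 1) = r ^ card S * (chi S x * chi S y)"
        using chi_pats[OF x S] chi_pats[OF y S] by simp
    qed
    finally show ?thesis .
  qed
  have "(\<Sum>x\<in>pats N. \<Sum>y\<in>pats N. c x * c y * (\<Prod>i<N. (1 + r * x i * y i) / 4))
      = (\<Sum>x\<in>pats N. \<Sum>y\<in>pats N. \<Sum>S\<in>Pow {..<N}. r ^ card S * (((1/2) ^ N * c x * chi S x) * ((1/2) ^ N * c y * chi S y)))"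
  proof (intro sum.cong refl)
    fix x y assume xy: "x \<in> pats N" "y \<in> pats N"
    have h: "(1/4::real) ^ N = (1/2) ^ N * (1/2) ^ N" by (simp add: power_mult_distrib[symmetric])
    have "c x * c y * (\<Prod>i<N. (1 + r * x i * y i) / 4) = c x * c y * ((1/4) ^ N * (\<Sum>S\<in>Pow {..<N}. r ^ card S * (chi S x * chi S y)))"
      by (simp only: prod[OF xy])
    also have "\<dots> = (\<Sum>S\<in>Pow {..<N}. r ^ card S * (((1/2) ^ N * c x * chi S x) * ((1/2) ^ N * c y * chi S y)))"
      unfolding h by (simp add: sum_distrib_left algebra_simps)
    finally show "c x * c y * (\<Prod>i<N. (1 + r * x i * y i) / 4)
       = (\<Sum>S\<in>Pow {..<N}. r ^ card S * (((1/2) ^ N * c x * chi S x) * ((1/2) ^ N * c y * chi S y)))" .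
  qed
  also have "\<dots> = (\<Sum>S\<in>Pow {..<N}. r ^ card S * ((\<Sum>x\<in>pats N. (1/2) ^ N * c x * chi S x) * (\<Sum>y\<in>pats N. (1/2) ^ N * c y * chi S y)))"
  proof -
    have "(\<Sum>x\<in>pats N. \<Sum>y\<in>pats N. \<Sum>S\<in>Pow {..<N}. r ^ card S * (((1/2) ^ N * c x * chi S x) * ((1/2) ^ N * c y * chi S y)))
        = (\<Sum>x\<in>pats N. \<Sum>S\<in>Pow {..<N}. \<Sum>y\<in>pats N. r ^ card S * (((1/2) ^ N * c x * chi S x) * ((1/2) ^ N * c y * chi S y)))"
      by (intro sum.cong refl) (rule sum.swap)
    also have "\<dots> = (\<Sum>S\<in>Pow {..<N}. \<Sum>x\<in>pats N. \<Sum>y\<in>pats N. r ^ card S * (((1/2) ^ N * c x * chi S x) * ((1/2) ^ N * c y * chi S y)))"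
      by (rule sum.swap)
    also have "\<dots> = (\<Sum>S\<in>Pow {..<N}. r ^ card S * ((\<Sum>x\<in>pats N. (1/2) ^ N * c x * chi S x) * (\<Sum>y\<in>pats N. (1/2) ^ N * c y * chi S y)))"
      by (intro sum.cong refl) (rule sum_sum_prod)
    finally show ?thesis .
  qed
  also have "\<dots> = (\<Sum>S\<in>Pow {..<N}. r ^ card S * (\<Sum>x\<in>pats N. (1/2) ^ N * c x * chi S x) ^ 2)"
    by (simp add: power2_eq_square)
  finally show ?thesis .
qed

lemma noise_corr_lim:
  assumes bf: "boolean_fun f" and fin: "finitary f"
  shows "(\<lambda>N. \<integral>p. fN f N (\<lambda>i. fst (p i)) * fN f N (\<lambda>i. snd (p i)) \<partial>NoiseCube \<epsilon>) \<longlonglongrightarrow> noise_corr f \<epsilon>"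
  unfolding noise_corr_def
proof (rule integral_dominated_convergence[where w="\<lambda>_. 1"])
  note fm = boolean_fun_bounds(1)[OF bf] and fb = boolean_fun_bounds(2)[OF bf]
  interpret Nz: prob_space "NoiseCube \<epsilon>" by (rule prob_space_NoiseCube)
  have m1: "(\<lambda>p. g (\<lambda>i. fst (p i))) \<in> borel_measurable (NoiseCube \<epsilon>)" if "g \<in> borel_measurable Cube" for g
    using measurable_compose[OF meas_fst_coord that] .
  have m2: "(\<lambda>p. g (\<lambda>i. snd (p i))) \<in> borel_measurable (NoiseCube \<epsilon>)" if "g \<in> borel_measurable Cube" for g
    using measurable_compose[OF meas_snd_coord that] .
  show "(\<lambda>p. f (\<lambda>i. fst (p i)) * f (\<lambda>i. snd (p i))) \<in> borel_measurable (NoiseCube \<epsilon>)"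
    using m1[OF fm] m2[OF fm] by (rule borel_measurable_times)
  show "(\<lambda>p. fN f N (\<lambda>i. fst (p i)) * fN f N (\<lambda>i. snd (p i))) \<in> borel_measurable (NoiseCube \<epsilon>)" for N
    using m1[OF fN_measurable] m2[OF fN_measurable] by (rule borel_measurable_times)
  show "integrable (NoiseCube \<epsilon>) (\<lambda>_. 1::real)" by simp
  show "AE p in NoiseCube \<epsilon>. (\<lambda>N. fN f N (\<lambda>i. fst (p i)) * fN f N (\<lambda>i. snd (p i))) \<longlonglongrightarrow> f (\<lambda>i. fst (p i)) * f (\<lambda>i. snd (p i))"
    using AE_fst_coord[OF fN_eventually[OF fm fin], of \<epsilon>] AE_snd_coord[OF fN_eventually[OF fm fin], of \<epsilon>]
  proof eventually_elim
    case (elim p)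
    have "eventually (\<lambda>N. fN f N (\<lambda>i. fst (p i)) * fN f N (\<lambda>i. snd (p i)) = f (\<lambda>i. fst (p i)) * f (\<lambda>i. snd (p i))) sequentially"
      using elim by eventually_elim simp
    then show ?case by (rule tendsto_eventually)
  qed
  show "AE p in NoiseCube \<epsilon>. norm (fN f N (\<lambda>i. fst (p i)) * fN f N (\<lambda>i. snd (p i))) \<le> 1" for N
    using abs_fN[OF fm fb, of N] by (intro AE_I2) (simp add: abs_mult mult_le_one)
qed

lemma cov_N:
  assumes bf: "boolean_fun f" and e: "0 \<le> \<epsilon>" "\<epsilon> \<le> 1"
  shows "(\<integral>p. fN f N (\<lambda>i. fst (p i)) * fN f N (\<lambda>i. snd (p i)) \<partial>NoiseCube \<epsilon>) - (\<integral>\<omega>. f \<omega> \<partial>Cube) ^ 2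
     = (\<Sum>S\<in>Pow {..<N} - {{}}. (1 - \<epsilon>) ^ card S * fhat f S ^ 2)"
proof -
  note fm = boolean_fun_bounds(1)[OF bf] and fb = boolean_fun_bounds(2)[OF bf]
  have "(\<integral>p. fN f N (\<lambda>i. fst (p i)) * fN f N (\<lambda>i. snd (p i)) \<partial>NoiseCube \<epsilon>)
      = (\<Sum>S\<in>Pow {..<N}. (1 - \<epsilon>) ^ card S * (\<Sum>x\<in>pats N. (1/2) ^ N * cf f N x * chi S x) ^ 2)"
    unfolding noise_fN[OF e] by (rule noise_algebra)
  also have "\<dots> = (\<Sum>S\<in>Pow {..<N}. (1 - \<epsilon>) ^ card S * fhat f S ^ 2)"
    by (intro sum.cong refl) (simp add: fhat_pats[OF fm fb])
  also have "\<dots> = (1 - \<epsilon>) ^ card {} * fhat f {} ^ 2 + (\<Sum>S\<in>Pow {..<N} - {{}}. (1 - \<epsilon>) ^ card S * fhat f S ^ 2)"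
    by (subst sum.remove[of _ "{}"]) auto
  finally show ?thesis by (simp add: fhat_empty)
qed

lemma geom_bound:
  fixes r :: real assumes r: "0 \<le> r" "r < 1"
  shows "(\<Sum>k<n. real k * r ^ k) \<le> r / (1 - r) ^ 2"
proof -
  have eq: "(1 - r) ^ 2 * (\<Sum>k<n. real k * r ^ k) = r - real n * r ^ n + (real n - 1) * r ^ (n + 1)" for n
  proof (induction n)
    case (Suc n)
    have "(1 - r) ^ 2 * (\<Sum>k<Suc n. real k * r ^ k) = (1 - r) ^ 2 * (\<Sum>k<n. real k * r ^ k) + (1 - r) ^ 2 * (real n * r ^ n)"
      by (simp add: algebra_simps)
    also have "\<dots> = r - real (Suc n) * r ^ Suc n + (real (Suc n) - 1) * r ^ (Suc n + 1)"
      unfolding Suc.IH by (simp add: power2_eq_square algebra_simps)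
    finally show ?case .
  qed simp
  have "r - real n * r ^ n + (real n - 1) * r ^ (n + 1) \<le> r"
  proof -
    have "(real n - 1) * r ^ (n + 1) \<le> real n * r ^ n"
    proof (cases "n = 0")
      case False
      have "(real n - 1) * r ^ (n + 1) = ((real n - 1) * r) * r ^ n" by (simp add: algebra_simps)
      also have "\<dots> \<le> real n * r ^ n"
      proof (rule mult_right_mono)
        have "(real n - 1) * r \<le> (real n - 1) * 1" using False r by (intro mult_left_mono) auto
        then show "(real n - 1) * r \<le> real n" by simp
      qed (use r in simp)
      finally show ?thesis .
    qed (use r in simp)
    then show ?thesis by simp
  qed
  then have "(1 - r) ^ 2 * (\<Sum>k<n. real k * r ^ k) \<le> r" using eq by simp
  moreover have "(1 - r) ^ 2 > 0" using r by simp
  ultimately show ?thesis by (simp add: field_simps mult.commute)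
qed

lemma revealment_nonneg:
  assumes bf: "boolean_fun f" and fin: "finitary f"
  shows "0 \<le> revealment f"
  using revealment_bound[OF bf fin, of "{}" 1] by simp

lemma cov_bound:
  assumes bf: "boolean_fun f" and fin: "finitary f" and e: "0 < \<epsilon>" "\<epsilon> \<le> 1"
  shows "0 \<le> noise_corr f \<epsilon> - (\<integral>\<omega>. f \<omega> \<partial>Cube) ^ 2"
    and "noise_corr f \<epsilon> - (\<integral>\<omega>. f \<omega> \<partial>Cube) ^ 2 \<le> (1 - \<epsilon>) / \<epsilon> ^ 2 * revealment f"
proof -
  define r where "r = 1 - \<epsilon>"
  have r: "0 \<le> r" "r < 1" using e by (auto simp: r_def)
  define \<delta> where "\<delta> = revealment f"
  have d0: "0 \<le> \<delta>" unfolding \<delta>_def by (rule revealment_nonneg[OF bf fin])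
  define c where "c N = (\<Sum>S\<in>Pow {..<N} - {{}}. r ^ card S * fhat f S ^ 2)" for N
  have lim: "c \<longlonglongrightarrow> noise_corr f \<epsilon> - (\<integral>\<omega>. f \<omega> \<partial>Cube) ^ 2"
  proof -
    have "(\<lambda>N. (\<integral>p. fN f N (\<lambda>i. fst (p i)) * fN f N (\<lambda>i. snd (p i)) \<partial>NoiseCube \<epsilon>) - (\<integral>\<omega>. f \<omega> \<partial>Cube) ^ 2)
        \<longlonglongrightarrow> noise_corr f \<epsilon> - (\<integral>\<omega>. f \<omega> \<partial>Cube) ^ 2"
      by (intro tendsto_diff noise_corr_lim[OF bf fin] tendsto_const)
    moreover have "(\<lambda>N. (\<integral>p. fN f N (\<lambda>i. fst (p i)) * fN f N (\<lambda>i. snd (p i)) \<partial>NoiseCube \<epsilon>) - (\<integral>\<omega>. f \<omega> \<partial>Cube) ^ 2) = c"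
      using e by (intro ext) (simp add: cov_N[OF bf] c_def r_def)
    ultimately show ?thesis by simp
  qed
  have c0: "0 \<le> c N" for N unfolding c_def using r by (intro sum_nonneg) auto
  have cb: "c N \<le> r / (1 - r) ^ 2 * \<delta>" for N
  proof -
    define A where "A = Pow {..<N} - {{}}"
    have Afin: "finite A" by (simp add: A_def)
    have "c N = (\<Sum>k\<in>card ` A. \<Sum>S\<in>{S\<in>A. card S = k}. r ^ card S * fhat f S ^ 2)"
      unfolding c_def A_def[symmetric] by (rule sum.image_gen[OF Afin])
    also have "\<dots> = (\<Sum>k\<in>card ` A. r ^ k * (\<Sum>S\<in>{S\<in>A. card S = k}. fhat f S ^ 2))"
      by (intro sum.cong refl) (simp add: sum_distrib_left)
    also have "\<dots> \<le> (\<Sum>k\<in>card ` A. r ^ k * (real k * \<delta>))"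
    proof (intro sum_mono mult_left_mono)
      fix k assume k: "k \<in> card ` A"
      then obtain S0 where S0: "S0 \<in> A" "k = card S0" by auto
      have "S0 \<noteq> {}" "finite S0" using S0 by (auto simp: A_def finite_subset)
      then have kpos: "k > 0" using S0 by (simp add: card_gt_0_iff)
      show "(\<Sum>S\<in>{S\<in>A. card S = k}. fhat f S ^ 2) \<le> real k * \<delta>"
        unfolding \<delta>_def
        by (rule revealment_bound[OF bf fin _ _ kpos]) (auto simp: A_def Afin finite_subset)
    qed (use r in simp)
    also have "\<dots> \<le> (\<Sum>k<N+1. r ^ k * (real k * \<delta>))"
    proof (rule sum_mono2)
      show "card ` A \<subseteq> {..<N+1}"
      proof
        fix k assume "k \<in> card ` A"
        then obtain S where "S \<in> A" "k = card S" by auto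
        then have "k \<le> card {..<N}" using card_mono[of "{..<N}" S] by (auto simp: A_def)
        then show "k \<in> {..<N+1}" by simp
      qed
    qed (use r d0 in auto)
    also have "\<dots> = \<delta> * (\<Sum>k<N+1. real k * r ^ k)" by (simp add: sum_distrib_left algebra_simps)
    also have "\<dots> \<le> \<delta> * (r / (1 - r) ^ 2)" by (intro mult_left_mono geom_bound r d0)
    finally show ?thesis by (simp add: mult.commute)
  qed
  show "0 \<le> noise_corr f \<epsilon> - (\<integral>\<omega>. f \<omega> \<partial>Cube) ^ 2"
    by (rule LIMSEQ_le_const[OF lim]) (use c0 in auto)
  have "noise_corr f \<epsilon> - (\<integral>\<omega>. f \<omega> \<partial>Cube) ^ 2 \<le> r / (1 - r) ^ 2 * \<delta>"
    by (rule LIMSEQ_le_const2[OF lim]) (use cb in auto)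
  then show "noise_corr f \<epsilon> - (\<integral>\<omega>. f \<omega> \<partial>Cube) ^ 2 \<le> (1 - \<epsilon>) / \<epsilon> ^ 2 * revealment f"
    by (simp add: r_def \<delta>_def)
qed

theorem mainTheorem20:
  fixes f :: "nat \<Rightarrow> (nat \<Rightarrow> real) \<Rightarrow> real"
  assumes "\<And>n. boolean_fun (f n)"
    and "\<And>n. finitary (f n)"
    and "(\<lambda>n. revealment (f n)) \<longlonglongrightarrow> 0"
  shows "noise_sensitive f"
  unfolding noise_sensitive_def
proof
  fix \<epsilon> :: real assume "\<epsilon> \<in> {0<..1}"
  then have e: "0 < \<epsilon>" "\<epsilon> \<le> 1" by auto
  show "(\<lambda>n. noise_corr (f n) \<epsilon> - (\<integral>\<omega>. f n \<omega> \<partial>Cube) ^ 2) \<longlonglongrightarrow> 0"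
  proof (rule tendsto_sandwich[where f="\<lambda>_. 0" and h="\<lambda>n. (1 - \<epsilon>) / \<epsilon> ^ 2 * revealment (f n)"])
    show "\<forall>\<^sub>F n in sequentially. 0 \<le> noise_corr (f n) \<epsilon> - (\<integral>\<omega>. f n \<omega> \<partial>Cube) ^ 2"
      using cov_bound(1)[OF assms(1,2) e] by simp
    show "\<forall>\<^sub>F n in sequentially. noise_corr (f n) \<epsilon> - (\<integral>\<omega>. f n \<omega> \<partial>Cube) ^ 2 \<le> (1 - \<epsilon>) / \<epsilon> ^ 2 * revealment (f n)"
      using cov_bound(2)[OF assms(1,2) e] by simp
    show "(\<lambda>n. (1 - \<epsilon>) / \<epsilon> ^ 2 * revealment (f n)) \<longlonglongrightarrow> 0"
      using tendsto_mult_right_zero[OF assms(3), of "(1 - \<epsilon>) / \<epsilon> ^ 2"] by simp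
  qed simp
qed

end
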